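(* In the setting below, the Markov chain on $\mathcal{G}$ defined by iterating the Unweighted Graph Sampler is ergodic with respect to the uniform distribution on $\mathcal{G}$; in particular it is reversible with respect to the uniform distribution and any $G'\in\mathcal{G}$ can be reached from any $G\in\mathcal{G}$ with positive probability.
   Context: Setting (unweighted graphs). $V$ is a finite vertex set; graphs are either all directed or all undirected with no multiple edges; $uv$ denotes the possible edge from $u$ to $v$ ($uv=vu$ if undirected). $G_0$ is a given graph on $V$ and $\mathcal{F}$ a given set of possible edges. $\mathcal{G}$ is the set of graphs $G$ on $V$ with the same degree sequence as $G_0$ (in- and out-degrees if directed) and $E(G)\cap\mathcal{F}=E(G_0)\cap\mathcal{F}$. $\tilde{\mathcal{F}}$ is the set of possible edges $uv$ present in every $G\in\mathcal{G}$ or absent from every $G\in\mathcal{G}$. $N_G(u)=\{v: vu\in E(G), vu\notin\tilde{\mathcal{F}}\}$, $M_G(u)=\{v: uv\notin E(G), uv\notin\tilde{\mathcal{F}}\}$. Unweighted Graph Sampler (one iteration from $G\in\mathcal{G}$): $W_{-1}=*$; sample $W_0$ uniformly from $\{v: N_G(v)\ne\emptyset\}$; $n=0$; repeat [sample $W_{n+1}$ uniformly from $N_G(W_n)\setminus\{W_{n-1}\}$; sample $W_{n+2}$ uniformly from $M_G(W_{n+1})$; remove edge $W_{n+1}W_n$ from and add edge $W_{n+1}W_{n+2}$ to the current graph $G$; $n\leftarrow n+2$] until $W_n=W_0$; output the current graph. The chain's next state is the output graph. *)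

theory Defs
  imports Main "HOL.Real"
begin

text \<open>Graphs on a vertex set V are represented by their edge sets, i.e. sets of
ordered pairs. The flag d says whether graphs are directed (d = True) or undirected
(d = False). An undirected graph is a symmetric edge set, the edge uv being
represented by both (u,v) and (v,u).\<close>

definition possible_edges :: "'a set \<Rightarrow> ('a \<times> 'a) set" where
  "possible_edges V = {(u, v). u \<in> V \<and> v \<in> V \<and> u \<noteq> v}"

definition wf_graph :: "bool \<Rightarrow> 'a set \<Rightarrow> ('a \<times> 'a) set \<Rightarrow> bool" where
  "wf_graph d V E \<longleftrightarrow> E \<subseteq> possible_edges V \<and> (\<not> d \<longrightarrow> sym E)"

definition indeg :: "('a \<times> 'a) set \<Rightarrow> 'a \<Rightarrow> nat" where
  "indeg E v = card {u. (u, v) \<in> E}"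

definition outdeg :: "('a \<times> 'a) set \<Rightarrow> 'a \<Rightarrow> nat" where
  "outdeg E v = card {u. (v, u) \<in> E}"

definition graph_class :: "bool \<Rightarrow> 'a set \<Rightarrow> ('a \<times> 'a) set \<Rightarrow> ('a \<times> 'a) set
    \<Rightarrow> ('a \<times> 'a) set set" where
  "graph_class d V F G0 = {E. wf_graph d V E
      \<and> (\<forall>v\<in>V. indeg E v = indeg G0 v \<and> outdeg E v = outdeg G0 v)
      \<and> E \<inter> F = G0 \<inter> F}"

definition fixed_pairs :: "bool \<Rightarrow> 'a set \<Rightarrow> ('a \<times> 'a) set \<Rightarrow> ('a \<times> 'a) set
    \<Rightarrow> ('a \<times> 'a) set" where
  "fixed_pairs d V F G0 = {(u, v). u \<in> V \<and> v \<in> V \<and>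
      ((\<forall>G\<in>graph_class d V F G0. (u, v) \<in> G) \<or> (\<forall>G\<in>graph_class d V F G0. (u, v) \<notin> G))}"

definition nbrs :: "('a \<times> 'a) set \<Rightarrow> ('a \<times> 'a) set \<Rightarrow> 'a \<Rightarrow> 'a set" where
  "nbrs Ft E u = {v. (v, u) \<in> E \<and> (v, u) \<notin> Ft}"

definition non_nbrs :: "'a set \<Rightarrow> ('a \<times> 'a) set \<Rightarrow> ('a \<times> 'a) set \<Rightarrow> 'a \<Rightarrow> 'a set" where
  "non_nbrs V Ft E u = {v \<in> V. (u, v) \<notin> E \<and> (u, v) \<notin> Ft}"

definition add_edge :: "bool \<Rightarrow> ('a \<times> 'a) set \<Rightarrow> 'a \<Rightarrow> 'a \<Rightarrow> ('a \<times> 'a) set" where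
  "add_edge d E u v = (if d then insert (u, v) E else insert (u, v) (insert (v, u) E))"

definition del_edge :: "bool \<Rightarrow> ('a \<times> 'a) set \<Rightarrow> 'a \<Rightarrow> 'a \<Rightarrow> ('a \<times> 'a) set" where
  "del_edge d E u v = (if d then E - {(u, v)} else E - {(u, v), (v, u)})"

text \<open>walk_prob d V Ft k E w0 prev cur G' is the probability that the repeat-loop of the
sampler, started in the current graph E with start vertex W_0 = w0, previous vertex
W_{n-1} (None encodes *) and current vertex W_n = cur, terminates within at most k
further loop iterations and outputs G'.\<close>
fun walk_prob :: "bool \<Rightarrow> 'a set \<Rightarrow> ('a \<times> 'a) set \<Rightarrow> nat \<Rightarrow> ('a \<times> 'a) set
    \<Rightarrow> 'a \<Rightarrow> 'a option \<Rightarrow> 'a \<Rightarrow> ('a \<times> 'a) set \<Rightarrow> real" where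
  "walk_prob d V Ft 0 E w0 prev cur G' = 0"
| "walk_prob d V Ft (Suc k) E w0 prev cur G' =
     (let A = nbrs Ft E cur - set_option prev in
      \<Sum>x\<in>A. \<Sum>y\<in>non_nbrs V Ft E x.
        (1 / real (card A)) * (1 / real (card (non_nbrs V Ft E x))) *
        (let E' = add_edge d (del_edge d E x cur) x y in
         if y = w0 then (if E' = G' then 1 else 0)
         else walk_prob d V Ft k E' w0 (Some x) y G'))"

text \<open>One-step transition probability of the chain (one iteration of the sampler).
If no vertex has N_G(v) nonempty, W_0 cannot be sampled and the chain stays put.\<close>
definition trans_prob :: "bool \<Rightarrow> 'a set \<Rightarrow> ('a \<times> 'a) set \<Rightarrow> ('a \<times> 'a) set
    \<Rightarrow> ('a \<times> 'a) set \<Rightarrow> ('a \<times> 'a) set \<Rightarrow> real" where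
  "trans_prob d V F G0 G G' =
     (let Ft = fixed_pairs d V F G0; S = {v \<in> V. nbrs Ft G v \<noteq> {}} in
      if S = {} then (if G' = G then 1 else 0)
      else (\<Sum>w\<in>S. (1 / real (card S)) * (SUP k. walk_prob d V Ft k G w None w G')))"

fun trans_pow :: "bool \<Rightarrow> 'a set \<Rightarrow> ('a \<times> 'a) set \<Rightarrow> ('a \<times> 'a) set \<Rightarrow> nat
    \<Rightarrow> ('a \<times> 'a) set \<Rightarrow> ('a \<times> 'a) set \<Rightarrow> real" where
  "trans_pow d V F G0 0 G G' = (if G' = G then 1 else 0)"
| "trans_pow d V F G0 (Suc n) G G' =
     (\<Sum>H\<in>graph_class d V F G0. trans_prob d V F G0 G H * trans_pow d V F G0 n H G')"

end

theory Submission
  imports Defs Complex_Main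
begin

locale setting =
  fixes d :: bool and V :: "'a set" and F G0 :: "('a \<times> 'a) set"
  assumes finV: "finite V" and wf0: "wf_graph d V G0"
begin

abbreviation "C \<equiv> graph_class d V F G0"
abbreviation "Ft \<equiv> fixed_pairs d V F G0"

definition nin :: "('a \<times> 'a) set \<Rightarrow> 'a \<Rightarrow> 'a set" where
  "nin E v = {u. (u, v) \<in> E \<and> (u, v) \<notin> Ft}"
definition nout :: "('a \<times> 'a) set \<Rightarrow> 'a \<Rightarrow> 'a set" where
  "nout E v = {u. (v, u) \<in> E \<and> (v, u) \<notin> Ft}"
definition step :: "('a \<times> 'a) set \<Rightarrow> 'a \<Rightarrow> 'a \<Rightarrow> 'a \<Rightarrow> ('a \<times> 'a) set" where
  "step E x c y = add_edge d (del_edge d E x c) x y"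

definition wfg :: "('a \<times> 'a) set \<Rightarrow> bool" where
  "wfg E \<longleftrightarrow> wf_graph d V E"

lemma G0_in_C: "G0 \<in> C"
  using wf0 unfolding graph_class_def by auto

lemma C_wf: "H \<in> C \<Longrightarrow> wf_graph d V H"
  unfolding graph_class_def by auto

lemma wf_sub: "wf_graph d V E \<Longrightarrow> E \<subseteq> V \<times> V"
  unfolding wf_graph_def possible_edges_def by auto

lemma wf_sym: "wf_graph d V E \<Longrightarrow> \<not> d \<Longrightarrow> (u, v) \<in> E \<Longrightarrow> (v, u) \<in> E"
  unfolding wf_graph_def by (auto dest: symD)

lemma wf_noloop: "wf_graph d V E \<Longrightarrow> (u, u) \<notin> E"
  unfolding wf_graph_def possible_edges_def by auto

lemma finite_C: "finite C"
proof -
  have "C \<subseteq> Pow (V \<times> V)" using C_wf wf_sub by blast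
  thus ?thesis using finV by (meson finite_Pow_iff finite_SigmaI finite_subset)
qed

lemma Ft_iff: "(u, v) \<in> Ft \<longleftrightarrow> u \<in> V \<and> v \<in> V \<and> ((\<forall>H\<in>C. (u, v) \<in> H) \<or> (\<forall>H\<in>C. (u, v) \<notin> H))"
  unfolding fixed_pairs_def by auto

lemma Ft_sub: "Ft \<subseteq> V \<times> V"
  unfolding fixed_pairs_def by auto

lemma loop_Ft: "u \<in> V \<Longrightarrow> (u, u) \<in> Ft"
  unfolding Ft_iff using C_wf wf_noloop by blast

lemma Ft_sym: "\<not> d \<Longrightarrow> (u, v) \<in> Ft \<Longrightarrow> (v, u) \<in> Ft"
  unfolding Ft_iff using C_wf wf_sym by metis

lemma C_Ft: "H \<in> C \<Longrightarrow> H \<inter> Ft = G0 \<inter> Ft"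
  unfolding fixed_pairs_def using G0_in_C by blast

lemma nonfixed_in: "(u, v) \<notin> Ft \<Longrightarrow> u \<in> V \<Longrightarrow> v \<in> V \<Longrightarrow> \<exists>H\<in>C. (u, v) \<in> H"
  unfolding Ft_iff by blast

lemma nonfixed_out: "(u, v) \<notin> Ft \<Longrightarrow> u \<in> V \<Longrightarrow> v \<in> V \<Longrightarrow> \<exists>H\<in>C. (u, v) \<notin> H"
  unfolding Ft_iff by blast

lemma nin_fin: "E \<subseteq> V \<times> V \<Longrightarrow> finite (nin E v)"
  unfolding nin_def by (rule finite_subset[OF _ finV]) auto
lemma nout_fin: "E \<subseteq> V \<times> V \<Longrightarrow> finite (nout E v)"
  unfolding nout_def by (rule finite_subset[OF _ finV]) auto

lemma indeg_split:
  assumes "E \<subseteq> V \<times> V" "E \<inter> Ft = G0 \<inter> Ft"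
  shows "indeg E v = card (nin E v) + card {u. (u, v) \<in> G0 \<inter> Ft}"
proof -
  have "{u. (u, v) \<in> E} = nin E v \<union> {u. (u, v) \<in> G0 \<inter> Ft}"
    using assms(2) unfolding nin_def by blast
  moreover have "finite {u. (u, v) \<in> G0 \<inter> Ft}"
    by (rule finite_subset[OF _ finV]) (use Ft_sub in auto)
  moreover have "nin E v \<inter> {u. (u, v) \<in> G0 \<inter> Ft} = {}" unfolding nin_def by auto
  ultimately show ?thesis unfolding indeg_def
    using card_Un_disjoint nin_fin[OF assms(1)] by metis
qed

lemma outdeg_split:
  assumes "E \<subseteq> V \<times> V" "E \<inter> Ft = G0 \<inter> Ft"
  shows "outdeg E v = card (nout E v) + card {u. (v, u) \<in> G0 \<inter> Ft}"
proof -
  have "{u. (v, u) \<in> E} = nout E v \<union> {u. (v, u) \<in> G0 \<inter> Ft}"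
    using assms(2) unfolding nout_def by blast
  moreover have "finite {u. (v, u) \<in> G0 \<inter> Ft}"
    by (rule finite_subset[OF _ finV]) (use Ft_sub in auto)
  moreover have "nout E v \<inter> {u. (v, u) \<in> G0 \<inter> Ft} = {}" unfolding nout_def by auto
  ultimately show ?thesis unfolding outdeg_def
    using card_Un_disjoint nout_fin[OF assms(1)] by metis
qed

lemma nout_nin_sym: "\<not> d \<Longrightarrow> wf_graph d V E \<Longrightarrow> nout E v = nin E v"
  unfolding nout_def nin_def using wf_sym Ft_sym by blast

definition winv :: "'a \<Rightarrow> ('a \<times> 'a) set \<Rightarrow> 'a \<Rightarrow> bool" where
  "winv w0 E c \<longleftrightarrow> wf_graph d V E \<and> E \<inter> Ft = G0 \<inter> Ft \<and> c \<in> V \<and> w0 \<in> V \<and>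
     (\<forall>v\<in>V. card (nin E v) + (if v = w0 then 1 else 0) = card (nin G0 v) + (if v = c then 1 else 0)) \<and>
     (d \<longrightarrow> (\<forall>v\<in>V. card (nout E v) = card (nout G0 v)))"

lemma C_inv: "H \<in> C \<Longrightarrow> w0 \<in> V \<Longrightarrow> winv w0 H w0"
proof -
  assume H: "H \<in> C" and w: "w0 \<in> V"
  have wf: "wf_graph d V H" using H C_wf by auto
  have sub: "H \<subseteq> V \<times> V" "G0 \<subseteq> V \<times> V" using wf wf0 wf_sub by auto
  have ft: "H \<inter> Ft = G0 \<inter> Ft" using H C_Ft by auto
  have ft0: "G0 \<inter> Ft = G0 \<inter> Ft" by simp
  have deg: "\<forall>v\<in>V. indeg H v = indeg G0 v \<and> outdeg H v = outdeg G0 v"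
    using H unfolding graph_class_def by auto
  have a: "\<forall>v\<in>V. card (nin H v) = card (nin G0 v)"
    using deg indeg_split[OF sub(1) ft] indeg_split[OF sub(2) ft0] by simp
  have b: "\<forall>v\<in>V. card (nout H v) = card (nout G0 v)"
    using deg outdeg_split[OF sub(1) ft] outdeg_split[OF sub(2) ft0] by simp
  have c: "d \<longrightarrow> (\<forall>v\<in>V. card (nout H v) = card (nout G0 v))" using b by blast
  have e: "\<forall>v\<in>V. card (nin H v) + (if v = w0 then 1 else 0) = card (nin G0 v) + (if v = w0 then 1 else 0)"
    using a by simp
  show ?thesis unfolding winv_def using wf ft w c e by blast
qed

lemma inv_C:
  assumes "winv w0 E w0" shows "E \<in> C"
proof -
  have wf: "wf_graph d V E" and ft: "E \<inter> Ft = G0 \<inter> Ft"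
    and cnt0: "\<forall>v\<in>V. card (nin E v) + (if v = w0 then 1 else 0) = card (nin G0 v) + (if v = w0 then 1 else 0)"
    and cnto: "d \<longrightarrow> (\<forall>v\<in>V. card (nout E v) = card (nout G0 v))"
    using assms unfolding winv_def by blast+
  have cnt: "\<forall>v\<in>V. card (nin E v) = card (nin G0 v)" using cnt0 by simp
  have sub: "E \<subseteq> V \<times> V" "G0 \<subseteq> V \<times> V" using wf wf0 wf_sub by auto
  have ft0: "G0 \<inter> Ft = G0 \<inter> Ft" by simp
  have ind: "\<forall>v\<in>V. indeg E v = indeg G0 v"
    using cnt indeg_split[OF sub(1) ft] indeg_split[OF sub(2) ft0] by simp
  have outd: "\<forall>v\<in>V. outdeg E v = outdeg G0 v"
  proof (cases d)
    case True
    then have "\<forall>v\<in>V. card (nout E v) = card (nout G0 v)" using cnto by blast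
    then show ?thesis
      using outdeg_split[OF sub(1) ft] outdeg_split[OF sub(2) ft0] by simp
  next
    case False
    have "outdeg X v = indeg X v" if "wf_graph d V X" for X v
    proof -
      have "{u. (v, u) \<in> X} = {u. (u, v) \<in> X}"
        using wf_sym[OF that False] by blast
      thus ?thesis unfolding outdeg_def indeg_def by simp
    qed
    then show ?thesis using ind wf wf0 by simp
  qed
  have "E \<inter> F = G0 \<inter> F"
  proof -
    have pf: "p \<in> Ft" if "p \<in> F" "p \<in> V \<times> V" for p
    proof -
      obtain a b where p: "p = (a, b)" by (cases p)
      have "\<forall>H\<in>C. (p \<in> H \<longleftrightarrow> p \<in> G0)" unfolding graph_class_def using that by blast
      thus ?thesis using that unfolding p fixed_pairs_def by blast
    qed
    show ?thesis
    proof (intro equalityI subsetI)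
      fix p assume "p \<in> E \<inter> F"
      then have "p \<in> E \<inter> Ft" using pf sub by blast
      then show "p \<in> G0 \<inter> F" using ft \<open>p \<in> E \<inter> F\<close> by blast
    next
      fix p assume "p \<in> G0 \<inter> F"
      then have "p \<in> G0 \<inter> Ft" using pf sub by blast
      then show "p \<in> E \<inter> F" using ft \<open>p \<in> G0 \<inter> F\<close> by blast
    qed
  qed
  thus ?thesis unfolding graph_class_def using wf ind outd by blast
qed

definition stepok :: "('a \<times> 'a) set \<Rightarrow> 'a \<Rightarrow> 'a \<Rightarrow> 'a \<Rightarrow> bool" where
  "stepok E x c y \<longleftrightarrow> (x, c) \<in> E \<and> (x, c) \<notin> Ft \<and> y \<in> V \<and> (x, y) \<notin> E \<and> (x, y) \<notin> Ft"

lemma step_d: "d \<Longrightarrow> step E x c y = insert (x, y) (E - {(x, c)})"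
  unfolding step_def add_edge_def del_edge_def by simp

lemma step_u: "\<not> d \<Longrightarrow> step E x c y = insert (x, y) (insert (y, x) (E - {(x, c), (c, x)}))"
  unfolding step_def add_edge_def del_edge_def by simp

lemma stepok_facts:
  assumes "wf_graph d V E" "stepok E x c y"
  shows "x \<in> V" "c \<in> V" "x \<noteq> c" "x \<noteq> y" "c \<noteq> y"
proof -
  show xV: "x \<in> V" and "c \<in> V" using assms wf_sub unfolding stepok_def by blast+
  show "x \<noteq> c" using assms wf_noloop unfolding stepok_def by blast
  show "x \<noteq> y" using assms loop_Ft[OF xV] unfolding stepok_def by blast
  show "c \<noteq> y" using assms unfolding stepok_def by blast
qed

lemma step_wf:
  assumes "wf_graph d V E" "stepok E x c y"
  shows "wf_graph d V (step E x c y)"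
proof -
  note f = stepok_facts[OF assms]
  have y: "y \<in> V" using assms(2) unfolding stepok_def by blast
  show ?thesis
  proof (cases d)
    case True
    then show ?thesis using assms(1) f y unfolding step_d[OF True] wf_graph_def possible_edges_def by blast
  next
    case False
    have sub: "step E x c y \<subseteq> possible_edges V"
      using assms(1) f y unfolding step_u[OF False] wf_graph_def possible_edges_def by blast
    have "sym (step E x c y)"
      unfolding step_u[OF False] using wf_sym[OF assms(1) False] by (auto intro!: symI)
    then show ?thesis using sub False unfolding wf_graph_def by blast
  qed
qed

lemma step_Ft:
  assumes "wf_graph d V E" "stepok E x c y"
  shows "step E x c y \<inter> Ft = E \<inter> Ft"
proof (cases d)
  case True
  then show ?thesis using assms(2) unfolding step_d[OF True] stepok_def by blast
next
  case False
  have "(c, x) \<notin> Ft" "(y, x) \<notin> Ft" using assms(2) Ft_sym[OF False] unfolding stepok_def by blast+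
  then show ?thesis using assms(2) unfolding step_u[OF False] stepok_def by blast
qed

lemma step_nin_card:
  assumes "wf_graph d V E" "stepok E x c y"
  shows "card (nin (step E x c y) v) + (if v = c then 1 else 0) = card (nin E v) + (if v = y then 1 else 0)"
proof -
  note f = stepok_facts[OF assms]
  have sub: "E \<subseteq> V \<times> V" using assms(1) wf_sub by blast
  have fin: "finite (nin E v)" using nin_fin[OF sub] .
  have xc: "x \<in> nin E c" and xy: "x \<notin> nin E y" using assms(2) unfolding stepok_def nin_def by auto
  have c0: "card (nin E c) > 0" using xc nin_fin[OF sub] card_gt_0_iff by blast
  show ?thesis
  proof (cases d)
    case True
    have "nin (step E x c y) v = (if v = c then nin E v - {x} else if v = y then insert x (nin E v) else nin E v)"
      using assms(2) f unfolding step_d[OF True] nin_def stepok_def by auto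
    then show ?thesis using fin xc xy f c0 by (auto simp: card_Diff_singleton card_insert_if)
  next
    case False
    have cx: "c \<in> nin E x" and yx: "y \<notin> nin E x"
      using assms(2) wf_sym[OF assms(1) False] Ft_sym[OF False] unfolding stepok_def nin_def by blast+
    have "(c, x) \<notin> Ft" "(y, x) \<notin> Ft" using assms(2) Ft_sym[OF False] unfolding stepok_def by blast+
    then have eq: "nin (step E x c y) v = (if v = c then nin E v - {x} else if v = y then insert x (nin E v)
        else if v = x then insert y (nin E v - {c}) else nin E v)"
      using assms(2) f unfolding step_u[OF False] nin_def stepok_def by auto
    have x0: "card (nin E x) > 0" using cx nin_fin[OF sub] card_gt_0_iff by blast
    then show ?thesis using eq fin xc xy cx yx f c0 x0 by (auto simp: card_Diff_singleton card_insert_if)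
  qed
qed

lemma step_nout_card:
  assumes "d" "wf_graph d V E" "stepok E x c y"
  shows "card (nout (step E x c y) v) = card (nout E v)"
proof -
  note f = stepok_facts[OF assms(2,3)]
  have sub: "E \<subseteq> V \<times> V" using assms(2) wf_sub by blast
  have fin: "finite (nout E v)" using nout_fin[OF sub] .
  have xc: "c \<in> nout E x" and xy: "y \<notin> nout E x" using assms(3) unfolding stepok_def nout_def by auto
  have c0: "card (nout E x) > 0" using xc nout_fin[OF sub] card_gt_0_iff by blast
  have "nout (step E x c y) v = (if v = x then insert y (nout E v - {c}) else nout E v)"
    using assms(3) f unfolding step_d[OF assms(1)] nout_def stepok_def by auto
  then show ?thesis using fin xc xy f c0 by (auto simp: card_Diff_singleton card_insert_if)
qed

lemma step_winv:
  assumes "winv w0 E c" "stepok E x c y"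
  shows "winv w0 (step E x c y) y"
proof -
  have wf: "wf_graph d V E" and ft: "E \<inter> Ft = G0 \<inter> Ft" and w: "w0 \<in> V"
    and cnt: "\<forall>v\<in>V. card (nin E v) + (if v = w0 then 1 else 0) = card (nin G0 v) + (if v = c then 1 else 0)"
    and cnto: "d \<longrightarrow> (\<forall>v\<in>V. card (nout E v) = card (nout G0 v))"
    using assms(1) unfolding winv_def by blast+
  have y: "y \<in> V" using assms(2) unfolding stepok_def by blast
  have wf': "wf_graph d V (step E x c y)" using step_wf[OF wf assms(2)] .
  have ft': "step E x c y \<inter> Ft = G0 \<inter> Ft" using step_Ft[OF wf assms(2)] ft by simp
  have cnt': "\<forall>v\<in>V. card (nin (step E x c y) v) + (if v = w0 then 1 else 0) = card (nin G0 v) + (if v = y then 1 else 0)"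
  proof
    fix v assume v: "v \<in> V"
    have a: "card (nin (step E x c y) v) + (if v = c then 1 else 0) = card (nin E v) + (if v = y then 1 else 0)"
      using step_nin_card[OF wf assms(2)] .
    have b: "card (nin E v) + (if v = w0 then 1 else 0) = card (nin G0 v) + (if v = c then 1 else 0)"
      using cnt v by blast
    show "card (nin (step E x c y) v) + (if v = w0 then 1 else 0) = card (nin G0 v) + (if v = y then 1 else 0)"
      using a b by (auto split: if_splits)
  qed
  have cnto': "d \<longrightarrow> (\<forall>v\<in>V. card (nout (step E x c y) v) = card (nout G0 v))"
  proof
    assume dd: d
    have "\<forall>v\<in>V. card (nout E v) = card (nout G0 v)" using cnto dd by blast
    moreover have "\<forall>v. card (nout (step E x c y) v) = card (nout E v)" using step_nout_card[OF dd wf assms(2)] by blast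
    ultimately show "\<forall>v\<in>V. card (nout (step E x c y) v) = card (nout G0 v)" by simp
  qed
  show ?thesis unfolding winv_def using wf' ft' y w cnt' cnto' by blast
qed

abbreviation wp :: "nat \<Rightarrow> ('a \<times> 'a) set \<Rightarrow> 'a \<Rightarrow> 'a option \<Rightarrow> 'a \<Rightarrow> ('a \<times> 'a) set \<Rightarrow> real" where
  "wp k E w0 prev cur G' \<equiv> walk_prob d V Ft k E w0 prev cur G'"

definition Aset :: "('a \<times> 'a) set \<Rightarrow> 'a option \<Rightarrow> 'a \<Rightarrow> 'a set" where
  "Aset E prev cur = nbrs Ft E cur - set_option prev"
definition Mset :: "('a \<times> 'a) set \<Rightarrow> 'a \<Rightarrow> 'a set" where
  "Mset E x = non_nbrs V Ft E x"

lemma wp_Suc: "wp (Suc k) E w0 prev cur G' =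
  (\<Sum>x\<in>Aset E prev cur. \<Sum>y\<in>Mset E x.
     (1 / real (card (Aset E prev cur))) * (1 / real (card (Mset E x))) *
     (if y = w0 then (if step E x cur y = G' then 1 else 0) else wp k (step E x cur y) w0 (Some x) y G'))"
  unfolding walk_prob.simps(2) Aset_def Mset_def step_def Let_def by (rule refl)

declare walk_prob.simps(2)[simp del]

lemma AM_stepok: "x \<in> Aset E prev cur \<Longrightarrow> y \<in> Mset E x \<Longrightarrow> stepok E x cur y"
  unfolding Aset_def Mset_def nbrs_def non_nbrs_def stepok_def by blast

lemma A_sub: "E \<subseteq> V \<times> V \<Longrightarrow> Aset E prev cur \<subseteq> V"
  unfolding Aset_def nbrs_def by auto
lemma M_sub: "Mset E x \<subseteq> V"
  unfolding Mset_def non_nbrs_def by auto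
lemma A_fin: "E \<subseteq> V \<times> V \<Longrightarrow> finite (Aset E prev cur)"
  by (rule finite_subset[OF A_sub finV])
lemma M_fin: "finite (Mset E x)"
  by (rule finite_subset[OF M_sub finV])

lemma wp_nonneg: "0 \<le> wp k E w0 prev cur G'"
proof (induction k arbitrary: E prev cur)
  case 0 then show ?case by simp
next
  case (Suc k)
  show ?case unfolding wp_Suc
  proof (intro sum_nonneg mult_nonneg_nonneg)
    fix x y
    show "0 \<le> (if y = w0 then (if step E x cur y = G' then 1 else 0) else wp k (step E x cur y) w0 (Some x) y G')"
      using Suc.IH by simp
  qed simp_all
qed

lemma wp_support: "winv w0 E cur \<Longrightarrow> wp k E w0 prev cur G' \<noteq> 0 \<Longrightarrow> G' \<in> C"
proof (induction k arbitrary: E prev cur)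
  case 0 then show ?case by simp
next
  case (Suc k)
  obtain x where x: "x \<in> Aset E prev cur" and
    sx: "(\<Sum>y\<in>Mset E x. (1 / real (card (Aset E prev cur))) * (1 / real (card (Mset E x))) *
     (if y = w0 then (if step E x cur y = G' then 1 else 0) else wp k (step E x cur y) w0 (Some x) y G')) \<noteq> 0"
    using Suc.prems(2) unfolding wp_Suc by (meson sum.neutral)
  obtain y where y: "y \<in> Mset E x" and
    ty: "(1 / real (card (Aset E prev cur))) * (1 / real (card (Mset E x))) *
     (if y = w0 then (if step E x cur y = G' then 1 else 0) else wp k (step E x cur y) w0 (Some x) y G') \<noteq> 0"
    using sx by (meson sum.neutral)
  have ok: "stepok E x cur y" using AM_stepok[OF x y] .
  have inv': "winv w0 (step E x cur y) y" using step_winv[OF Suc.prems(1) ok] .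
  show ?case
  proof (cases "y = w0")
    case True
    then have "step E x cur y = G'" using ty by (auto split: if_splits)
    then show ?thesis using inv_C inv' True by blast
  next
    case False
    then have "wp k (step E x cur y) w0 (Some x) y G' \<noteq> 0" using ty by auto
    then show ?thesis using Suc.IH inv' by blast
  qed
qed

lemma wp_mono_Suc: "wp k E w0 prev cur G' \<le> wp (Suc k) E w0 prev cur G'"
proof (induction k arbitrary: E prev cur)
  case 0 show ?case using wp_nonneg[of "Suc 0" E w0 prev cur G'] by (simp only: walk_prob.simps(1))
next
  case (Suc k)
  show ?case unfolding wp_Suc[of k E w0 prev cur G'] wp_Suc[of "Suc k" E w0 prev cur G']
    by (intro sum_mono mult_left_mono) (auto intro: Suc.IH)
qed

lemma wp_mono: "k \<le> k' \<Longrightarrow> wp k E w0 prev cur G' \<le> wp k' E w0 prev cur G'"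
proof (induction k' rule: dec_induct)
  case base then show ?case by simp
next
  case (step n) then show ?case using wp_mono_Suc order_trans by blast
qed

lemma nbrs_nin: "nbrs Ft E u = nin E u"
  unfolding nbrs_def nin_def by simp

lemma card_nin_C: "H \<in> C \<Longrightarrow> v \<in> V \<Longrightarrow> card (nin H v) = card (nin G0 v)"
  using C_inv[of H v] unfolding winv_def by auto

lemma card_nout_C: "d \<Longrightarrow> H \<in> C \<Longrightarrow> v \<in> V \<Longrightarrow> card (nout H v) = card (nout G0 v)"
proof -
  assume dd: d and H: "H \<in> C" and v: "v \<in> V"
  have "d \<longrightarrow> (\<forall>v\<in>V. card (nout H v) = card (nout G0 v))" using C_inv[OF H v] unfolding winv_def by blast
  then show ?thesis using dd v by blast
qed

lemma winv_cnt: "winv w0 E c \<Longrightarrow> v \<in> V \<Longrightarrow>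
   card (nin E v) + (if v = w0 then 1 else 0) = card (nin G0 v) + (if v = c then 1 else 0)"
  unfolding winv_def by blast

lemma winv_wf: "winv w0 E c \<Longrightarrow> wf_graph d V E"
  unfolding winv_def by blast
lemma winv_sub: "winv w0 E c \<Longrightarrow> E \<subseteq> V \<times> V"
  unfolding winv_def using wf_sub by blast
lemma winv_V: "winv w0 E c \<Longrightarrow> c \<in> V" "winv w0 E c \<Longrightarrow> w0 \<in> V"
  unfolding winv_def by blast+
lemma winv_Ft: "winv w0 E c \<Longrightarrow> E \<inter> Ft = G0 \<inter> Ft"
  unfolding winv_def by blast

lemma C_sub: "H \<in> C \<Longrightarrow> H \<subseteq> V \<times> V"
  using C_wf wf_sub by blast

lemma in_exists:
  assumes "winv w0 E cur" "cur \<noteq> w0" "H \<in> C"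
  shows "\<exists>x. (x, cur) \<in> E \<and> (x, cur) \<notin> H \<and> (x, cur) \<notin> Ft"
proof -
  have cV: "cur \<in> V" using winv_V assms(1) by blast
  have a: "card (nin E cur) + (if cur = w0 then 1 else 0) = card (nin G0 cur) + (if cur = cur then 1 else 0)"
    using winv_cnt[OF assms(1) cV] .
  have eq: "card (nin E cur) = card (nin H cur) + 1"
    using a assms(2) card_nin_C[OF assms(3) cV] by simp
  have fH: "finite (nin H cur)"
    using nin_fin C_sub[OF assms(3)] by blast
  have "\<not> nin E cur \<subseteq> nin H cur"
  proof
    assume "nin E cur \<subseteq> nin H cur"
    then have "card (nin E cur) \<le> card (nin H cur)" using fH by (rule card_mono[rotated])
    then show False using eq by simp
  qed
  then show ?thesis unfolding nin_def by blast
qed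

lemma out_exists:
  assumes "winv w0 E cur" "H \<in> C" "(x, c) \<in> E" "(x, c) \<notin> H" "(x, c) \<notin> Ft" "x \<noteq> cur"
  shows "\<exists>y. (x, y) \<in> H \<and> (x, y) \<notin> E \<and> (x, y) \<notin> Ft \<and> y \<in> V"
proof -
  have subE: "E \<subseteq> V \<times> V" using winv_sub[OF assms(1)] .
  have subH: "H \<subseteq> V \<times> V" using C_sub[OF assms(2)] .
  have xV: "x \<in> V" using assms(3) subE by blast
  have finE: "finite (nout E x)" and finH: "finite (nout H x)" using nout_fin subE subH by blast+
  have le: "card (nout E x) \<le> card (nout H x)"
  proof (cases d)
    case True
    have "d \<longrightarrow> (\<forall>v\<in>V. card (nout E v) = card (nout G0 v))" using assms(1) unfolding winv_def by blast
    then show ?thesis using True card_nout_C[OF True assms(2) xV] xV by simp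
  next
    case False
    have "card (nin E x) \<le> card (nin G0 x)" using winv_cnt[OF assms(1) xV] assms(6) by simp
    then show ?thesis using nout_nin_sym[OF False winv_wf[OF assms(1)]]
        nout_nin_sym[OF False C_wf[OF assms(2)]] card_nin_C[OF assms(2) xV] by simp
  qed
  have cin: "c \<in> nout E x" "c \<notin> nout H x" using assms(3,4,5) unfolding nout_def by auto
  have "\<not> nout H x \<subseteq> nout E x"
  proof
    assume "nout H x \<subseteq> nout E x"
    then have "nout H x \<subseteq> nout E x - {c}" using cin by blast
    then have "card (nout H x) \<le> card (nout E x - {c})" using finE by (intro card_mono) auto
    also have "\<dots> < card (nout E x)" using finE cin(1) by (rule card_Diff1_less)
    finally show False using le by simp
  qed
  then obtain y where "y \<in> nout H x" "y \<notin> nout E x" by blast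
  then show ?thesis using subH unfolding nout_def by blast
qed

definition good :: "'a \<Rightarrow> ('a \<times> 'a) set \<Rightarrow> 'a option \<Rightarrow> 'a \<Rightarrow> bool" where
  "good w0 E prev cur \<longleftrightarrow> winv w0 E cur \<and>
     (case prev of None \<Rightarrow> cur = w0 \<and> nin E w0 \<noteq> {}
      | Some x \<Rightarrow> cur \<noteq> w0 \<and> (x, cur) \<in> E \<and> (x, cur) \<notin> Ft)"

lemma good_winv: "good w0 E prev cur \<Longrightarrow> winv w0 E cur"
  unfolding good_def by blast

lemma A_nonempty:
  assumes "good w0 E prev cur" shows "Aset E prev cur \<noteq> {}"
proof (cases prev)
  case None
  then show ?thesis using assms unfolding good_def Aset_def nbrs_nin by simp
next
  case (Some x)
  have inv: "winv w0 E cur" and cw: "cur \<noteq> w0" and xc: "(x, cur) \<in> E" "(x, cur) \<notin> Ft"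
    using assms Some unfolding good_def by auto
  have sub: "E \<subseteq> V \<times> V" using winv_sub[OF inv] .
  have xV: "x \<in> V" and cV: "cur \<in> V" using xc sub by auto
  obtain H where H: "H \<in> C" "(x, cur) \<in> H" using nonfixed_in[OF xc(2) xV cV] by blast
  have "x \<in> nin H cur" using H xc unfolding nin_def by blast
  then have "card (nin H cur) \<ge> 1" using nin_fin[OF C_sub[OF H(1)]]
    by (metis One_nat_def Suc_leI card_gt_0_iff empty_iff)
  then have "card (nin E cur) \<ge> 2" using winv_cnt[OF inv cV] cw card_nin_C[OF H(1) cV] by simp
  then have "card (nin E cur - {x}) \<ge> 1" using nin_fin[OF sub] by (simp add: card_Diff_singleton_if) linarith
  then have "nin E cur - {x} \<noteq> {}" by (metis card.empty not_one_le_zero)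
  then show ?thesis using Some unfolding Aset_def nbrs_nin by simp
qed

lemma A_stepok_x: "x \<in> Aset E prev cur \<Longrightarrow> (x, cur) \<in> E \<and> (x, cur) \<notin> Ft"
  unfolding Aset_def nbrs_def by blast

lemma M_nonempty:
  assumes "good w0 E prev cur" "x \<in> Aset E prev cur" shows "Mset E x \<noteq> {}"
proof -
  have inv: "winv w0 E cur" using good_winv[OF assms(1)] .
  have xc: "(x, cur) \<in> E" "(x, cur) \<notin> Ft" using A_stepok_x[OF assms(2)] by blast+
  have sub: "E \<subseteq> V \<times> V" using winv_sub[OF inv] .
  have xV: "x \<in> V" and cV: "cur \<in> V" using xc sub by auto
  have xnc: "x \<noteq> cur" using xc wf_noloop[OF winv_wf[OF inv]] by blast
  obtain H where H: "H \<in> C" "(x, cur) \<notin> H" using nonfixed_out[OF xc(2) xV cV] by blast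
  obtain y where "(x, y) \<notin> E" "(x, y) \<notin> Ft" "y \<in> V"
    using out_exists[OF inv H(1) xc(1) H(2) xc(2) xnc] by blast
  then show ?thesis unfolding Mset_def non_nbrs_def by blast
qed

lemma good_step:
  assumes "good w0 E prev cur" "x \<in> Aset E prev cur" "y \<in> Mset E x" "y \<noteq> w0"
  shows "good w0 (step E x cur y) (Some x) y"
proof -
  have ok: "stepok E x cur y" using AM_stepok[OF assms(2,3)] .
  have inv: "winv w0 E cur" using good_winv[OF assms(1)] .
  have f: "x \<noteq> y" using stepok_facts[OF winv_wf[OF inv] ok] by blast
  have "(x, y) \<in> step E x cur y" unfolding step_def add_edge_def by auto
  moreover have "(x, y) \<notin> Ft" using ok unfolding stepok_def by blast
  ultimately show ?thesis unfolding good_def using step_winv[OF inv ok] assms(4) by simp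
qed

lemma good_stop:
  assumes "good w0 E prev cur" "x \<in> Aset E prev cur" "y \<in> Mset E x" "y = w0"
  shows "step E x cur y \<in> C"
  using step_winv[OF good_winv[OF assms(1)] AM_stepok[OF assms(2,3)]] assms(4) inv_C by simp

definition pr :: "('a \<times> 'a) set \<Rightarrow> 'a option \<Rightarrow> 'a \<Rightarrow> 'a \<Rightarrow> real" where
  "pr E prev cur x = (1 / real (card (Aset E prev cur))) * (1 / real (card (Mset E x)))"

lemma pr_nonneg: "0 \<le> pr E prev cur x"
  unfolding pr_def by simp

lemma wp_Suc': "wp (Suc k) E w0 prev cur G' =
  (\<Sum>x\<in>Aset E prev cur. \<Sum>y\<in>Mset E x. pr E prev cur x *
     (if y = w0 then (if step E x cur y = G' then 1 else 0) else wp k (step E x cur y) w0 (Some x) y G'))"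
  unfolding wp_Suc pr_def by (rule refl)

definition T :: "nat \<Rightarrow> 'a \<Rightarrow> ('a \<times> 'a) set \<Rightarrow> 'a option \<Rightarrow> 'a \<Rightarrow> real" where
  "T k w0 E prev cur = (\<Sum>G'\<in>C. wp k E w0 prev cur G')"

lemma T_0: "T 0 w0 E prev cur = 0"
  unfolding T_def by simp

lemma T_nonneg: "0 \<le> T k w0 E prev cur"
  unfolding T_def by (intro sum_nonneg) (rule wp_nonneg)

lemma T_Suc:
  assumes "good w0 E prev cur"
  shows "T (Suc k) w0 E prev cur = (\<Sum>x\<in>Aset E prev cur. \<Sum>y\<in>Mset E x. pr E prev cur x *
     (if y = w0 then 1 else T k w0 (step E x cur y) (Some x) y))"
proof -
  let ?A = "Aset E prev cur"
  let ?g = "\<lambda>x y G'. (if y = w0 then (if step E x cur y = G' then 1 else 0) else wp k (step E x cur y) w0 (Some x) y G')"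
  have "T (Suc k) w0 E prev cur = (\<Sum>G'\<in>C. \<Sum>x\<in>?A. \<Sum>y\<in>Mset E x. pr E prev cur x * ?g x y G')"
    unfolding T_def wp_Suc' by (rule refl)
  also have "\<dots> = (\<Sum>x\<in>?A. \<Sum>G'\<in>C. \<Sum>y\<in>Mset E x. pr E prev cur x * ?g x y G')"
    by (rule sum.swap)
  also have "\<dots> = (\<Sum>x\<in>?A. \<Sum>y\<in>Mset E x. \<Sum>G'\<in>C. pr E prev cur x * ?g x y G')"
    by (intro sum.cong refl sum.swap)
  also have "\<dots> = (\<Sum>x\<in>?A. \<Sum>y\<in>Mset E x. pr E prev cur x * (\<Sum>G'\<in>C. ?g x y G'))"
    by (simp add: sum_distrib_left)
  also have "\<dots> = (\<Sum>x\<in>?A. \<Sum>y\<in>Mset E x. pr E prev cur x *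
     (if y = w0 then 1 else T k w0 (step E x cur y) (Some x) y))"
  proof (intro sum.cong refl)
    fix x y assume x: "x \<in> ?A" and y: "y \<in> Mset E x"
    show "pr E prev cur x * (\<Sum>G'\<in>C. ?g x y G') = pr E prev cur x *
     (if y = w0 then 1 else T k w0 (step E x cur y) (Some x) y)"
    proof (cases "y = w0")
      case True
      have "step E x cur y \<in> C" using good_stop[OF assms x y True] .
      then show ?thesis using True finite_C by (simp add: sum.delta)
    next
      case False
      then show ?thesis unfolding T_def by simp
    qed
  qed
  finally show ?thesis .
qed

lemma pr_sum:
  assumes "good w0 E prev cur"
  shows "(\<Sum>x\<in>Aset E prev cur. \<Sum>y\<in>Mset E x. pr E prev cur x) = 1"
proof -
  have sub: "E \<subseteq> V \<times> V" using winv_sub[OF good_winv[OF assms]] .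
  have fA: "finite (Aset E prev cur)" using A_fin[OF sub] .
  have nA: "Aset E prev cur \<noteq> {}" using A_nonempty[OF assms] .
  have "(\<Sum>y\<in>Mset E x. pr E prev cur x) = 1 / real (card (Aset E prev cur))" if x: "x \<in> Aset E prev cur" for x
  proof -
    have "Mset E x \<noteq> {}" using M_nonempty[OF assms x] .
    then have "card (Mset E x) > 0" using M_fin card_gt_0_iff by blast
    then show ?thesis unfolding pr_def by simp
  qed
  then have "(\<Sum>x\<in>Aset E prev cur. \<Sum>y\<in>Mset E x. pr E prev cur x) =
     (\<Sum>x\<in>Aset E prev cur. 1 / real (card (Aset E prev cur)))" by (rule sum.cong[OF refl])
  also have "\<dots> = 1" using fA nA card_gt_0_iff by simp
  finally show ?thesis .
qed

lemma T_le1: "good w0 E prev cur \<Longrightarrow> T k w0 E prev cur \<le> 1"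
proof (induction k arbitrary: E prev cur)
  case 0 then show ?case using T_0 by simp
next
  case (Suc k)
  have "T (Suc k) w0 E prev cur \<le> (\<Sum>x\<in>Aset E prev cur. \<Sum>y\<in>Mset E x. pr E prev cur x * 1)"
    unfolding T_Suc[OF Suc.prems]
  proof (intro sum_mono mult_left_mono pr_nonneg)
    fix x y assume x: "x \<in> Aset E prev cur" and y: "y \<in> Mset E x"
    show "(if y = w0 then 1 else T k w0 (step E x cur y) (Some x) y) \<le> 1"
      using Suc.IH[OF good_step[OF Suc.prems x y]] by simp
  qed
  also have "\<dots> = 1" using pr_sum[OF Suc.prems] by simp
  finally show ?case .
qed

lemma Q_Suc:
  assumes "good w0 E prev cur"
  shows "1 - T (Suc k) w0 E prev cur = (\<Sum>x\<in>Aset E prev cur. \<Sum>y\<in>Mset E x. pr E prev cur x *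
     (if y = w0 then 0 else 1 - T k w0 (step E x cur y) (Some x) y))"
proof -
  have "1 - T (Suc k) w0 E prev cur = (\<Sum>x\<in>Aset E prev cur. \<Sum>y\<in>Mset E x. pr E prev cur x) -
     (\<Sum>x\<in>Aset E prev cur. \<Sum>y\<in>Mset E x. pr E prev cur x *
     (if y = w0 then 1 else T k w0 (step E x cur y) (Some x) y))"
    using pr_sum[OF assms] T_Suc[OF assms] by simp
  also have "\<dots> = (\<Sum>x\<in>Aset E prev cur. \<Sum>y\<in>Mset E x. pr E prev cur x -  pr E prev cur x *
     (if y = w0 then 1 else T k w0 (step E x cur y) (Some x) y))"
    by (simp add: sum_subtractf)
  also have "\<dots> = (\<Sum>x\<in>Aset E prev cur. \<Sum>y\<in>Mset E x. pr E prev cur x *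
     (if y = w0 then 0 else 1 - T k w0 (step E x cur y) (Some x) y))"
    by (intro sum.cong refl) (simp add: algebra_simps)
  finally show ?thesis .
qed

lemma Q_mult:
  assumes B: "\<And>E prev cur. good w0 E prev cur \<Longrightarrow> 1 - T m w0 E prev cur \<le> B" and B0: "0 \<le> B"
  shows "good w0 E prev cur \<Longrightarrow> 1 - T (n + m) w0 E prev cur \<le> (1 - T n w0 E prev cur) * B"
proof (induction n arbitrary: E prev cur)
  case 0 then show ?case using B T_0 by simp
next
  case (Suc n)
  have "1 - T (Suc n + m) w0 E prev cur = (\<Sum>x\<in>Aset E prev cur. \<Sum>y\<in>Mset E x. pr E prev cur x *
     (if y = w0 then 0 else 1 - T (n + m) w0 (step E x cur y) (Some x) y))"
    using Q_Suc[OF Suc.prems, of "n + m"] by simp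
  also have "\<dots> \<le> (\<Sum>x\<in>Aset E prev cur. \<Sum>y\<in>Mset E x. pr E prev cur x *
     ((if y = w0 then 0 else 1 - T n w0 (step E x cur y) (Some x) y) * B))"
  proof (intro sum_mono mult_left_mono pr_nonneg)
    fix x y assume x: "x \<in> Aset E prev cur" and y: "y \<in> Mset E x"
    show "(if y = w0 then 0 else 1 - T (n + m) w0 (step E x cur y) (Some x) y)
        \<le> (if y = w0 then 0 else 1 - T n w0 (step E x cur y) (Some x) y) * B"
    proof (cases "y = w0")
      case False
      then show ?thesis using Suc.IH[OF good_step[OF Suc.prems x y False]] by simp
    qed simp
  qed
  also have "\<dots> = (1 - T (Suc n) w0 E prev cur) * B"
    unfolding Q_Suc[OF Suc.prems, of n] by (simp add: sum_distrib_right mult.assoc)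
  finally show ?case .
qed

definition sd :: "('a \<times> 'a) set \<Rightarrow> ('a \<times> 'a) set \<Rightarrow> ('a \<times> 'a) set" where
  "sd A B = (A - B) \<union> (B - A)"

lemma sd_step:
  assumes "wf_graph d V E" "H \<in> C" "stepok E x c y" "(x, c) \<notin> H" "(x, y) \<in> H"
  shows "sd (step E x c y) H \<subseteq> sd E H" "(x, c) \<in> sd E H" "(x, c) \<notin> sd (step E x c y) H"
proof -
  note f = stepok_facts[OF assms(1,3)]
  have ok: "(x, c) \<in> E" "(x, y) \<notin> E" using assms(3) unfolding stepok_def by blast+
  show "(x, c) \<in> sd E H" using ok assms(4) unfolding sd_def by blast
  show "sd (step E x c y) H \<subseteq> sd E H"
  proof (cases d)
    case True then show ?thesis using assms(4,5) unfolding sd_def step_d[OF True] by blast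
  next
    case False
    have "(y, x) \<in> H" "(c, x) \<notin> H" using assms(4,5) wf_sym[OF C_wf[OF assms(2)] False] by blast+
    then show ?thesis using assms(4,5) unfolding sd_def step_u[OF False] by blast
  qed
  show "(x, c) \<notin> sd (step E x c y) H"
  proof (cases d)
    case True then show ?thesis using assms(4) f unfolding sd_def step_d[OF True] by blast
  next
    case False then show ?thesis using assms(4) f unfolding sd_def step_u[OF False] by blast
  qed
qed

lemma sd_fin: "E \<subseteq> V \<times> V \<Longrightarrow> H \<subseteq> V \<times> V \<Longrightarrow> finite (sd E H)"
  unfolding sd_def using finV by (meson finite_SigmaI finite_Un finite_subset Diff_subset subset_trans)

lemma sd_step_less:
  assumes "wf_graph d V E" "H \<in> C" "stepok E x c y" "(x, c) \<notin> H" "(x, y) \<in> H"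
  shows "card (sd (step E x c y) H) < card (sd E H)"
proof -
  have "finite (sd E H)" using sd_fin wf_sub[OF assms(1)] C_sub[OF assms(2)] by blast
  moreover have "sd (step E x c y) H \<subset> sd E H" using sd_step[OF assms] by blast
  ultimately show ?thesis by (rule psubset_card_mono)
qed

definition cc :: real where "cc = 1 / (real (card V))^2"

lemma cc_pos: "x \<in> V \<Longrightarrow> 0 < cc" unfolding cc_def using finV card_gt_0_iff by fastforce
lemma cc_le1: "x \<in> V \<Longrightarrow> cc \<le> 1"
proof -
  assume "x \<in> V"
  then have "card V \<ge> 1" using finV card_gt_0_iff by (metis One_nat_def Suc_leI empty_iff)
  then have "(real (card V))^2 \<ge> 1" by simp
  then show ?thesis unfolding cc_def by (simp add: divide_le_eq)
qed

lemma pr_ge: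
  assumes "E \<subseteq> V \<times> V" "x \<in> Aset E prev cur" "y \<in> Mset E x"
  shows "cc \<le> pr E prev cur x"
proof -
  have a1: "card (Aset E prev cur) \<ge> 1" using assms(2) A_fin[OF assms(1)] card_gt_0_iff
    by (metis One_nat_def Suc_leI empty_iff)
  have m1: "card (Mset E x) \<ge> 1" using assms(3) M_fin card_gt_0_iff
    by (metis One_nat_def Suc_leI empty_iff)
  have a2: "card (Aset E prev cur) \<le> card V" using A_sub[OF assms(1)] finV card_mono by blast
  have m2: "card (Mset E x) \<le> card V" using M_sub finV card_mono by blast
  have "real (card (Aset E prev cur)) * real (card (Mset E x)) \<le> real (card V) * real (card V)"
    using a2 m2 by (intro mult_mono) auto
  moreover have "real (card (Aset E prev cur)) * real (card (Mset E x)) \<ge> 1"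
  proof -
    have "(1::real) \<le> real (card (Aset E prev cur))" "(1::real) \<le> real (card (Mset E x))" using a1 m1 by auto
    then show ?thesis using mult_mono[of 1 "real (card (Aset E prev cur))" 1 "real (card (Mset E x))"] by simp
  qed
  ultimately have "1 / (real (card V) * real (card V)) \<le> 1 / (real (card (Aset E prev cur)) * real (card (Mset E x)))"
    by (intro divide_left_mono) auto
  then show ?thesis unfolding cc_def pr_def by (simp add: power2_eq_square)
qed

lemma dsum_ge:
  fixes f :: "'a \<Rightarrow> 'a \<Rightarrow> real"
  assumes "finite A" "\<And>x. finite (B x)" "x0 \<in> A" "y0 \<in> B x0" "\<And>x y. x \<in> A \<Longrightarrow> y \<in> B x \<Longrightarrow> 0 \<le> f x y"
  shows "f x0 y0 \<le> (\<Sum>x\<in>A. \<Sum>y\<in>B x. f x y)"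
proof -
  have "f x0 y0 \<le> (\<Sum>y\<in>B x0. f x0 y)" using assms by (intro member_le_sum) auto
  also have "\<dots> \<le> (\<Sum>x\<in>A. \<Sum>y\<in>B x. f x y)" using assms by (intro member_le_sum sum_nonneg) auto
  finally show ?thesis .
qed

lemma greedy:
  assumes H: "H \<in> C"
  shows "good w0 E (Some x) cur \<Longrightarrow> (x, cur) \<in> H \<Longrightarrow>
    \<exists>G''. cc ^ (card (sd E H) + 1) \<le> wp (card (sd E H) + 1) E w0 (Some x) cur G'' \<and> sd G'' H \<subseteq> sd E H"
proof (induction "card (sd E H)" arbitrary: E x cur rule: less_induct)
  case less
  have inv: "winv w0 E cur" using good_winv[OF less.prems(1)] .
  have cw: "cur \<noteq> w0" and xc: "(x, cur) \<in> E" using less.prems(1) unfolding good_def by auto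
  have wf: "wf_graph d V E" using winv_wf[OF inv] .
  have sub: "E \<subseteq> V \<times> V" using winv_sub[OF inv] .
  obtain x' where x': "(x', cur) \<in> E" "(x', cur) \<notin> H" "(x', cur) \<notin> Ft" using in_exists[OF inv cw H] by blast
  have x'c: "x' \<noteq> cur" using x'(1) wf_noloop[OF wf] by blast
  obtain y' where y': "(x', y') \<in> H" "(x', y') \<notin> E" "(x', y') \<notin> Ft" "y' \<in> V"
    using out_exists[OF inv H x'(1,2,3) x'c] by blast
  have xA: "x' \<in> Aset E (Some x) cur" using x' less.prems(2) unfolding Aset_def nbrs_def by auto
  have yM: "y' \<in> Mset E x'" using y' unfolding Mset_def non_nbrs_def by blast
  have ok: "stepok E x' cur y'" using AM_stepok[OF xA yM] .
  let ?E' = "step E x' cur y'"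
  let ?N = "card (sd E H)"
  have less': "card (sd ?E' H) < ?N" using sd_step_less[OF wf H ok x'(2) y'(1)] .
  have sdsub: "sd ?E' H \<subseteq> sd E H" using sd_step(1)[OF wf H ok x'(2) y'(1)] .
  have cV: "cur \<in> V" using winv_V[OF inv] by blast
  have c0: "0 < cc" "cc \<le> 1" using cc_pos[OF cV] cc_le1[OF cV] by auto
  have pge: "cc \<le> pr E (Some x) cur x'" using pr_ge[OF sub xA yM] .
  let ?f = "\<lambda>G'' a b. pr E (Some x) cur a *
     (if b = w0 then (if step E a cur b = G'' then 1 else 0) else wp ?N (step E a cur b) w0 (Some a) b G'')"
  have single: "?f G'' x' y' \<le> wp (?N + 1) E w0 (Some x) cur G''" for G''
  proof -
    have "?f G'' x' y' \<le> (\<Sum>a\<in>Aset E (Some x) cur. \<Sum>b\<in>Mset E a. ?f G'' a b)"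
      by (rule dsum_ge[where f="?f G''" and A="Aset E (Some x) cur" and B="Mset E", OF A_fin[OF sub] M_fin xA yM]) (intro mult_nonneg_nonneg pr_nonneg; simp add: wp_nonneg)
    also have "\<dots> = wp (?N + 1) E w0 (Some x) cur G''" unfolding Suc_eq_plus1[symmetric] wp_Suc' by (rule refl)
    finally show ?thesis .
  qed
  show ?case
  proof (cases "y' = w0")
    case True
    have "cc ^ (?N + 1) \<le> cc ^ 1" using c0 by (intro power_decreasing) auto
    also have "\<dots> \<le> ?f ?E' x' y'" using pge True by simp
    also have "\<dots> \<le> wp (?N + 1) E w0 (Some x) cur ?E'" by (rule single)
    finally show ?thesis using sdsub by blast
  next
    case False
    have g': "good w0 ?E' (Some x') y'" using good_step[OF less.prems(1) xA yM False] .
    obtain G'' where G'': "cc ^ (card (sd ?E' H) + 1) \<le> wp (card (sd ?E' H) + 1) ?E' w0 (Some x') y' G''"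
      "sd G'' H \<subseteq> sd ?E' H"
      using less.hyps[OF less' g' y'(1)] by blast
    have "cc ^ (?N + 1) = cc * cc ^ ?N" by simp
    also have "\<dots> \<le> pr E (Some x) cur x' * cc ^ (card (sd ?E' H) + 1)"
    proof (rule mult_mono)
      show "cc ^ ?N \<le> cc ^ (card (sd ?E' H) + 1)" using c0 less' by (intro power_decreasing) auto
    qed (use pge c0 in auto)
    also have "\<dots> \<le> pr E (Some x) cur x' * wp ?N ?E' w0 (Some x') y' G''"
    proof (rule mult_left_mono[OF _ pr_nonneg])
      have "wp (card (sd ?E' H) + 1) ?E' w0 (Some x') y' G'' \<le> wp ?N ?E' w0 (Some x') y' G''"
        using less' by (intro wp_mono) auto
      then show "cc ^ (card (sd ?E' H) + 1) \<le> wp ?N ?E' w0 (Some x') y' G''" using G''(1) by linarith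
    qed
    also have "\<dots> = ?f G'' x' y'" using False by simp
    also have "\<dots> \<le> wp (?N + 1) E w0 (Some x) cur G''" by (rule single)
    finally show ?thesis using G''(2) sdsub by blast
  qed
qed

lemma T_mono: "k \<le> k' \<Longrightarrow> T k w0 E prev cur \<le> T k' w0 E prev cur"
  unfolding T_def by (intro sum_mono wp_mono)

lemma wp_le_T: "winv w0 E cur \<Longrightarrow> wp k E w0 prev cur G' \<le> T k w0 E prev cur"
proof (cases "G' \<in> C")
  case True
  assume "winv w0 E cur"
  show ?thesis unfolding T_def using True finite_C by (intro member_le_sum wp_nonneg) auto
next
  case False
  assume inv: "winv w0 E cur"
  then have "wp k E w0 prev cur G' = 0" using wp_support False by blast
  then show ?thesis using T_nonneg by simp
qed

lemma card_sd_le: "E \<subseteq> V \<times> V \<Longrightarrow> H \<subseteq> V \<times> V \<Longrightarrow> card (sd E H) \<le> card V ^ 2"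
proof -
  assume "E \<subseteq> V \<times> V" "H \<subseteq> V \<times> V"
  then have "sd E H \<subseteq> V \<times> V" unfolding sd_def by blast
  then have "card (sd E H) \<le> card (V \<times> V)" using finV by (intro card_mono) auto
  then show ?thesis by (simp add: card_cartesian_product power2_eq_square)
qed

definition KK :: nat where "KK = card V ^ 2 + 1"
definition dl :: real where "dl = cc ^ KK"

lemma dl_pos: "x \<in> V \<Longrightarrow> 0 < dl" unfolding dl_def using cc_pos by simp
lemma dl_le1: "x \<in> V \<Longrightarrow> dl \<le> 1" unfolding dl_def
  using cc_pos cc_le1 by (meson less_imp_le power_le_one)

lemma T_lower_some:
  assumes "good w0 E (Some x) cur"
  shows "dl \<le> T KK w0 E (Some x) cur"
proof -
  have inv: "winv w0 E cur" using good_winv[OF assms] .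
  have xc: "(x, cur) \<in> E" "(x, cur) \<notin> Ft" using assms unfolding good_def by auto
  have sub: "E \<subseteq> V \<times> V" using winv_sub[OF inv] .
  have xV: "x \<in> V" and cV: "cur \<in> V" using xc sub by auto
  obtain H where H: "H \<in> C" "(x, cur) \<in> H" using nonfixed_in[OF xc(2) xV cV] by blast
  obtain G'' where G'': "cc ^ (card (sd E H) + 1) \<le> wp (card (sd E H) + 1) E w0 (Some x) cur G''"
    using greedy[OF H(1) assms H(2)] by blast
  have N: "card (sd E H) + 1 \<le> KK" using card_sd_le[OF sub C_sub[OF H(1)]] unfolding KK_def by simp
  have "dl \<le> cc ^ (card (sd E H) + 1)" unfolding dl_def using N cc_pos[OF xV] cc_le1[OF xV]
    by (intro power_decreasing) auto
  also have "\<dots> \<le> wp (card (sd E H) + 1) E w0 (Some x) cur G''" by (rule G'')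
  also have "\<dots> \<le> wp KK E w0 (Some x) cur G''" using N by (rule wp_mono)
  also have "\<dots> \<le> T KK w0 E (Some x) cur" using wp_le_T[OF inv] .
  finally show ?thesis .
qed

lemma T_lower:
  assumes "good w0 E prev cur"
  shows "dl \<le> T (Suc KK) w0 E prev cur"
proof (cases prev)
  case (Some x)
  have "dl \<le> T KK w0 E prev cur" using T_lower_some assms Some by simp
  also have "\<dots> \<le> T (Suc KK) w0 E prev cur" by (rule T_mono) simp
  finally show ?thesis .
next
  case None
  have cV: "cur \<in> V" using winv_V good_winv assms by blast
  have "dl = (\<Sum>x\<in>Aset E prev cur. \<Sum>y\<in>Mset E x. pr E prev cur x) * dl" using pr_sum[OF assms] by simp
  also have "\<dots> = (\<Sum>x\<in>Aset E prev cur. \<Sum>y\<in>Mset E x. pr E prev cur x * dl)"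
    by (simp only: sum_distrib_right)
  also have "\<dots> \<le> (\<Sum>x\<in>Aset E prev cur. \<Sum>y\<in>Mset E x. pr E prev cur x *
     (if y = w0 then 1 else T KK w0 (step E x cur y) (Some x) y))"
  proof (intro sum_mono mult_left_mono pr_nonneg)
    fix x y assume x: "x \<in> Aset E prev cur" and y: "y \<in> Mset E x"
    show "dl \<le> (if y = w0 then 1 else T KK w0 (step E x cur y) (Some x) y)"
    proof (cases "y = w0")
      case True then show ?thesis using dl_le1[OF cV] by simp
    next
      case False then show ?thesis using T_lower_some[OF good_step[OF assms x y False]] by simp
    qed
  qed
  also have "\<dots> = T (Suc KK) w0 E prev cur" using T_Suc[OF assms] by simp
  finally show ?thesis .
qed

lemma T_geom:
  assumes "w0 \<in> V"
  shows "good w0 E prev cur \<Longrightarrow> 1 - T (j * Suc KK) w0 E prev cur \<le> (1 - dl) ^ j"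
proof (induction j arbitrary: E prev cur)
  case 0 then show ?case using T_0 by simp
next
  case (Suc j)
  have B0: "0 \<le> (1 - dl) ^ j" using dl_le1[OF assms] by simp
  have "1 - T (Suc KK + j * Suc KK) w0 E prev cur \<le> (1 - T (Suc KK) w0 E prev cur) * (1 - dl) ^ j"
    by (rule Q_mult[OF Suc.IH B0 Suc.prems])
  also have "\<dots> \<le> (1 - dl) * (1 - dl) ^ j"
    using T_lower[OF Suc.prems] B0 by (intro mult_right_mono) auto
  finally have "1 - T (Suc KK + j * Suc KK) w0 E prev cur \<le> (1 - dl) ^ Suc j" by simp
  moreover have "Suc j * Suc KK = Suc KK + j * Suc KK" by simp
  ultimately show ?case by metis
qed

lemma sum_SUP:
  assumes "good w0 G None w0"
  shows "(\<Sum>G'\<in>C. (SUP k. wp k G w0 None w0 G')) = 1"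
proof -
  have inv: "winv w0 G w0" using good_winv[OF assms] .
  have wV: "w0 \<in> V" using winv_V[OF inv] by blast
  have lim1: "(\<lambda>k. wp k G w0 None w0 G') \<longlonglongrightarrow> (SUP k. wp k G w0 None w0 G')" for G'
  proof (rule LIMSEQ_incseq_SUP)
    show "bdd_above (range (\<lambda>k. wp k G w0 None w0 G'))"
      using wp_le_T[OF inv] T_le1[OF assms] by (intro bdd_aboveI[of _ 1]) (fastforce intro: order_trans)
    show "incseq (\<lambda>k. wp k G w0 None w0 G')" by (intro incseq_SucI wp_mono_Suc)
  qed
  have limT: "(\<lambda>k. T k w0 G None w0) \<longlonglongrightarrow> (\<Sum>G'\<in>C. (SUP k. wp k G w0 None w0 G'))"
    unfolding T_def by (intro tendsto_sum lim1)
  have incT: "incseq (\<lambda>k. T k w0 G None w0)" by (intro incseq_SucI T_mono) auto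
  let ?l = "\<Sum>G'\<in>C. (SUP k. wp k G w0 None w0 G')"
  have "?l \<le> 1" using limT T_le1[OF assms] by (intro LIMSEQ_le_const2) auto
  moreover have "1 \<le> ?l"
  proof -
    have lb: "1 - (1 - dl) ^ j \<le> ?l" for j
    proof -
      have "1 - (1 - dl) ^ j \<le> T (j * Suc KK) w0 G None w0" using T_geom[OF wV assms] by smt
      also have "\<dots> \<le> ?l" using incseq_le[OF incT limT] .
      finally show ?thesis .
    qed
    have "(\<lambda>j. 1 - (1 - dl) ^ j) \<longlonglongrightarrow> 1 - 0"
      using dl_pos[OF wV] dl_le1[OF wV] by (intro tendsto_intros) auto
    then show ?thesis using lb by (intro LIMSEQ_le_const2[of "\<lambda>j. 1 - (1 - dl) ^ j"]) auto
  qed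
  ultimately show ?thesis by simp
qed

fun gwl :: "('a \<times> 'a) set \<Rightarrow> 'a list \<Rightarrow> ('a \<times> 'a) set \<Rightarrow> bool" where
  "gwl E [c] G' = (G' = E)"
| "gwl E (c # x # y # r) G' = (stepok E x c y \<and> gwl (step E x c y) (y # r) G')"
| "gwl E _ G' = False"

lemma step_inv:
  assumes "wf_graph d V E" "stepok E x c y"
  shows "stepok (step E x c y) x y c" "step (step E x c y) x y c = E"
proof -
  note f = stepok_facts[OF assms]
  have ok: "(x, c) \<in> E" "(x, c) \<notin> Ft" "y \<in> V" "(x, y) \<notin> E" "(x, y) \<notin> Ft"
    using assms(2) unfolding stepok_def by blast+
  show "stepok (step E x c y) x y c"
  proof (cases d)
    case True then show ?thesis using ok f unfolding stepok_def step_d[OF True] by blast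
  next
    case False then show ?thesis using ok f unfolding stepok_def step_u[OF False] by blast
  qed
  show "step (step E x c y) x y c = E"
  proof (cases d)
    case True then show ?thesis using ok f unfolding step_d[OF True] by blast
  next
    case False
    have "(c, x) \<in> E" "(y, x) \<notin> E" using ok wf_sym[OF assms(1) False] by blast+
    then show ?thesis using ok f unfolding step_u[OF False] by blast
  qed
qed

lemma gwl_snoc: "gwl E ws E1 \<Longrightarrow> stepok E1 x (last ws) c \<Longrightarrow> gwl E (ws @ [x, c]) (step E1 x (last ws) c)"
proof (induction E ws E1 rule: gwl.induct)
  case (1 E c G') then show ?case by simp
next
  case (2 E c x y r G') then show ?case by simp
qed auto

lemma gwl_rev: "gwl E ws G' \<Longrightarrow> wf_graph d V E \<Longrightarrow> gwl G' (rev ws) E"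
proof (induction E ws G' rule: gwl.induct)
  case (1 E c G') then show ?case by simp
next
  case (2 E c x y r G')
  have ok: "stepok E x c y" and g: "gwl (step E x c y) (y # r) G'" using 2(2) by auto
  have wf': "wf_graph d V (step E x c y)" using step_wf[OF 2(3) ok] .
  have ih: "gwl G' (rev (y # r)) (step E x c y)" using 2(1)[OF g wf'] .
  have "last (rev (y # r)) = y" by simp
  then have "gwl G' (rev (y # r) @ [x, c]) (step (step E x c y) x y c)"
    using gwl_snoc[OF ih] step_inv(1)[OF 2(3) ok] by simp
  then show ?case using step_inv(2)[OF 2(3) ok] by simp
qed auto

fun flat :: "('a \<times> 'a) list \<Rightarrow> 'a list" where
  "flat [] = []"
| "flat ((x, y) # ps) = x # y # flat ps"

fun odc :: "'a option \<Rightarrow> ('a \<times> 'a) list \<Rightarrow> bool" where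
  "odc prev [] = True"
| "odc prev ((x, y) # ps) = (x \<notin> set_option prev \<and> odc (Some x) ps)"

fun evc :: "'a \<Rightarrow> ('a \<times> 'a) list \<Rightarrow> bool" where
  "evc w0 [] = False"
| "evc w0 ((x, y) # ps) = (if y = w0 then ps = [] else evc w0 ps)"

fun vp :: "'a \<Rightarrow> ('a \<times> 'a) set \<Rightarrow> 'a option \<Rightarrow> 'a \<Rightarrow> ('a \<times> 'a) list \<Rightarrow> ('a \<times> 'a) set \<Rightarrow> bool" where
  "vp w0 E prev cur [] G' = False"
| "vp w0 E prev cur ((x, y) # ps) G' = (x \<in> Aset E prev cur \<and> y \<in> Mset E x \<and>
     (if y = w0 then ps = [] \<and> step E x cur y = G' else vp w0 (step E x cur y) (Some x) y ps G'))"

lemma AM_iff: "(x \<in> Aset E prev cur \<and> y \<in> Mset E x) \<longleftrightarrow> (stepok E x cur y \<and> x \<notin> set_option prev)"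
  unfolding Aset_def Mset_def nbrs_def non_nbrs_def stepok_def by blast

lemma vp_char: "vp w0 E prev cur ps G' \<longleftrightarrow> gwl E (cur # flat ps) G' \<and> odc prev ps \<and> evc w0 ps"
proof (induction ps arbitrary: E prev cur)
  case Nil then show ?case by simp
next
  case (Cons p ps)
  obtain x y where p: "p = (x, y)" by (cases p)
  show ?case
  proof (cases "y = w0")
    case True
    show ?thesis
    proof (cases ps)
      case Nil then show ?thesis using True p AM_iff[of x E prev cur y] by auto
    next
      case (Cons q qs)
      obtain a b where "q = (a, b)" by (cases q)
      then show ?thesis using True p Cons by simp
    qed
  next
    case False
    then show ?thesis using p Cons.IH AM_iff[of x E prev cur y] by auto
  qed
qed

definition cd :: "'a list \<Rightarrow> bool" where
  "cd l \<longleftrightarrow> (\<forall>i. Suc i < length l \<longrightarrow> l ! i \<noteq> l ! Suc i)"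

lemma cd_rev: "cd (rev l) = cd l"
proof -
  have "cd l" if "cd (rev l)" for l :: "'a list"
    unfolding cd_def
  proof (intro allI impI)
    fix i assume i: "Suc i < length l"
    have "rev l ! (length l - Suc (Suc i)) \<noteq> rev l ! Suc (length l - Suc (Suc i))"
      using that i unfolding cd_def by auto
    moreover have "rev l ! (length l - Suc (Suc i)) = l ! Suc i" using i by (simp add: rev_nth)
    moreover have "rev l ! Suc (length l - Suc (Suc i)) = l ! i" using i
      by (simp add: rev_nth Suc_diff_Suc)
    ultimately show "l ! i \<noteq> l ! Suc i" by metis
  qed
  from this[of l] this[of "rev l"] show ?thesis by auto
qed

lemma odc_cd: "odc (Some a) ps = cd (a # map fst ps)"
proof (induction ps arbitrary: a)
  case Nil then show ?case unfolding cd_def by simp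
next
  case (Cons p ps)
  obtain x y where p: "p = (x, y)" by (cases p)
  have "cd (a # x # map fst ps) = (a \<noteq> x \<and> cd (x # map fst ps))"
    unfolding cd_def
  proof
    assume h: "\<forall>i. Suc i < length (a # x # map fst ps) \<longrightarrow> (a # x # map fst ps) ! i \<noteq> (a # x # map fst ps) ! Suc i"
    show "a \<noteq> x \<and> (\<forall>i. Suc i < length (x # map fst ps) \<longrightarrow> (x # map fst ps) ! i \<noteq> (x # map fst ps) ! Suc i)"
    proof (intro conjI allI impI)
      show "a \<noteq> x" using h[rule_format, of 0] by simp
      fix i assume "Suc i < length (x # map fst ps)"
      then show "(x # map fst ps) ! i \<noteq> (x # map fst ps) ! Suc i" using h[rule_format, of "Suc i"] by simp
    qed
  next
    assume h: "a \<noteq> x \<and> (\<forall>i. Suc i < length (x # map fst ps) \<longrightarrow> (x # map fst ps) ! i \<noteq> (x # map fst ps) ! Suc i)"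
    show "\<forall>i. Suc i < length (a # x # map fst ps) \<longrightarrow> (a # x # map fst ps) ! i \<noteq> (a # x # map fst ps) ! Suc i"
    proof (intro allI impI)
      fix i assume i: "Suc i < length (a # x # map fst ps)"
      show "(a # x # map fst ps) ! i \<noteq> (a # x # map fst ps) ! Suc i"
      proof (cases i)
        case 0 then show ?thesis using h by simp
      next
        case (Suc j) then show ?thesis using h i by auto
      qed
    qed
  qed
  then show ?case using p Cons.IH by auto
qed

lemma odc_None: "odc None ps = cd (map fst ps)"
proof (cases ps)
  case Nil then show ?thesis unfolding cd_def by simp
next
  case (Cons p qs)
  obtain x y where "p = (x, y)" by (cases p)
  then show ?thesis using Cons odc_cd by simp
qed

lemma evc_char: "evc w0 ps \<longleftrightarrow> ps \<noteq> [] \<and> snd (last ps) = w0 \<and> w0 \<notin> set (butlast (map snd ps))"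
proof (induction ps)
  case Nil then show ?case by simp
next
  case (Cons p ps)
  obtain x y where p: "p = (x, y)" by (cases p)
  show ?case using Cons p by (cases ps) auto
qed

definition revp :: "'a \<Rightarrow> ('a \<times> 'a) list \<Rightarrow> ('a \<times> 'a) list" where
  "revp a ps = zip (rev (map fst ps)) (rev (butlast (a # map snd ps)))"

lemma flat_append: "flat (xs @ ys) = flat xs @ flat ys"
  by (induction xs rule: flat.induct) auto

lemma rev_last_butlast: "l \<noteq> [] \<Longrightarrow> rev l = last l # rev (butlast l)"
  by (metis append_butlast_last_id rev.simps(2) rev_rev_ident)

lemma revp_len: "length (revp a ps) = length ps"
  unfolding revp_def by simp

lemma revp_fst: "map fst (revp a ps) = rev (map fst ps)"
  unfolding revp_def by simp

lemma revp_snd: "map snd (revp a ps) = rev (butlast (a # map snd ps))"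
  unfolding revp_def by simp

lemma flat_rev: "rev (a # flat ps) = last (a # map snd ps) # flat (revp a ps)"
proof (induction ps rule: rev_induct)
  case Nil then show ?case unfolding revp_def by simp
next
  case (snoc p qs)
  obtain x y where p: "p = (x, y)" by (cases p)
  have "revp a (qs @ [(x, y)]) = zip (x # rev (map fst qs)) (rev (a # map snd qs))"
    unfolding revp_def by (simp add: butlast_append)
  also have "\<dots> = (x, last (a # map snd qs)) # revp a qs"
    unfolding revp_def using rev_last_butlast[of "a # map snd qs"] by simp
  finally have r: "revp a (qs @ [(x, y)]) = (x, last (a # map snd qs)) # revp a qs" .
  show ?case using snoc.IH unfolding p r by (simp add: flat_append)
qed

lemma revp_set: "set ps \<subseteq> V \<times> V \<Longrightarrow> a \<in> V \<Longrightarrow> set (revp a ps) \<subseteq> V \<times> V"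
proof -
  assume ps: "set ps \<subseteq> V \<times> V" and a: "a \<in> V"
  have "set (map fst (revp a ps)) \<subseteq> V" using ps unfolding revp_fst by auto
  moreover have "set (map snd (revp a ps)) \<subseteq> V"
  proof -
    have "set (a # map snd ps) \<subseteq> V" using ps a by auto
    then have "set (butlast (a # map snd ps)) \<subseteq> V" by (meson in_set_butlastD subset_iff)
    then show ?thesis unfolding revp_snd by simp
  qed
  ultimately show ?thesis by fastforce
qed

lemma evc_ys:
  assumes "evc w0 ps"
  shows "map snd ps \<noteq> []" "last (map snd ps) = w0" "w0 \<notin> set (butlast (map snd ps))"
    "butlast (w0 # map snd ps) = w0 # butlast (map snd ps)"
  using assms unfolding evc_char by (auto simp: last_map)

lemma revp_snd': "evc w0 ps \<Longrightarrow> map snd (revp w0 ps) = rev (butlast (map snd ps)) @ [w0]"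
  unfolding revp_snd using evc_ys by simp

lemma revp_evc: "evc w0 ps \<Longrightarrow> evc w0 (revp w0 ps)"
proof -
  assume e: "evc w0 ps"
  have ne: "revp w0 ps \<noteq> []" using e revp_len[of w0 ps] unfolding evc_char by auto
  have sn: "map snd (revp w0 ps) = rev (butlast (map snd ps)) @ [w0]" using revp_snd'[OF e] .
  have "snd (last (revp w0 ps)) = w0" using sn ne by (metis last_map last_snoc)
  moreover have "w0 \<notin> set (butlast (map snd (revp w0 ps)))" using sn evc_ys(3)[OF e] by simp
  ultimately show ?thesis using ne unfolding evc_char by blast
qed

lemma revp_invol: "evc w0 ps \<Longrightarrow> revp w0 (revp w0 ps) = ps"
proof -
  assume e: "evc w0 ps"
  have sn: "map snd (revp w0 ps) = rev (butlast (map snd ps)) @ [w0]" using revp_snd'[OF e] .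
  have "map fst (revp w0 (revp w0 ps)) = map fst ps" unfolding revp_fst by simp
  moreover have "map snd (revp w0 (revp w0 ps)) = map snd ps"
  proof -
    have "map snd (revp w0 (revp w0 ps)) = rev (butlast (w0 # rev (butlast (map snd ps)) @ [w0]))"
      unfolding revp_snd[of w0 "revp w0 ps"] sn by simp
    also have "\<dots> = butlast (map snd ps) @ [w0]" by (simp add: butlast_append)
    also have "\<dots> = map snd ps" using evc_ys(1,2)[OF e] by (metis append_butlast_last_id)
    finally show ?thesis .
  qed
  ultimately show ?thesis by (metis zip_map_fst_snd)
qed

lemma vp_rev:
  assumes "vp w0 G None w0 ps G'" "wf_graph d V G"
  shows "vp w0 G' None w0 (revp w0 ps) G"
proof -
  have g: "gwl G (w0 # flat ps) G'" and o: "odc None ps" and e: "evc w0 ps"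
    using assms(1) unfolding vp_char by blast+
  have "gwl G' (rev (w0 # flat ps)) G" using gwl_rev[OF g assms(2)] .
  moreover have "last (w0 # map snd ps) = w0" using evc_ys(1,2)[OF e] by simp
  ultimately have g': "gwl G' (w0 # flat (revp w0 ps)) G" unfolding flat_rev by simp
  have o': "odc None (revp w0 ps)" using o unfolding odc_None revp_fst cd_rev .
  show ?thesis unfolding vp_char using g' o' revp_evc[OF e] by blast
qed

fun wt :: "('a \<times> 'a) set \<Rightarrow> 'a option \<Rightarrow> 'a \<Rightarrow> ('a \<times> 'a) list \<Rightarrow> real" where
  "wt E prev cur [] = 1"
| "wt E prev cur ((x, y) # ps) = pr E prev cur x * wt (step E x cur y) (Some x) y ps"

definition LL :: "nat \<Rightarrow> ('a \<times> 'a) list set" where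
  "LL k = {ps. set ps \<subseteq> V \<times> V \<and> length ps \<le> k}"

lemma LL_fin: "finite (LL k)"
  unfolding LL_def using finV by (intro finite_lists_length_le) auto

lemma LL_Suc: "LL (Suc k) = insert [] ((\<lambda>(p, ps). p # ps) ` ((V \<times> V) \<times> LL k))"
proof (intro equalityI subsetI)
  fix ps assume "ps \<in> LL (Suc k)"
  then show "ps \<in> insert [] ((\<lambda>(p, ps). p # ps) ` ((V \<times> V) \<times> LL k))"
    unfolding LL_def by (cases ps) auto
next
  fix ps assume "ps \<in> insert [] ((\<lambda>(p, ps). p # ps) ` ((V \<times> V) \<times> LL k))"
  then show "ps \<in> LL (Suc k)" unfolding LL_def by auto
qed

lemma step_sub: "E \<subseteq> V \<times> V \<Longrightarrow> x \<in> V \<Longrightarrow> y \<in> V \<Longrightarrow> step E x c y \<subseteq> V \<times> V"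
  unfolding step_def add_edge_def del_edge_def by auto

lemma wp_paths:
  "E \<subseteq> V \<times> V \<Longrightarrow> wp k E w0 prev cur G' = (\<Sum>ps\<in>LL k. if vp w0 E prev cur ps G' then wt E prev cur ps else 0)"
proof (induction k arbitrary: E prev cur)
  case 0
  have "LL 0 = {[]}" unfolding LL_def by auto
  then show ?case by simp
next
  case (Suc k)
  let ?g = "\<lambda>ps. if vp w0 E prev cur ps G' then wt E prev cur ps else 0"
  let ?h = "\<lambda>x y. pr E prev cur x *
     (if y = w0 then (if step E x cur y = G' then 1 else 0) else wp k (step E x cur y) w0 (Some x) y G')"
  have inj: "inj_on (\<lambda>(p, ps). p # ps) ((V \<times> V) \<times> LL k)" by (auto simp: inj_on_def)
  have nin: "[] \<notin> (\<lambda>(p, ps). p # ps) ` ((V \<times> V) \<times> LL k)" by auto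
  have "(\<Sum>ps\<in>LL (Suc k). ?g ps) = ?g [] + (\<Sum>ps\<in>(\<lambda>(p, ps). p # ps) ` ((V \<times> V) \<times> LL k). ?g ps)"
    unfolding LL_Suc using nin LL_fin finV by (subst sum.insert) auto
  also have "\<dots> = (\<Sum>q\<in>(V \<times> V) \<times> LL k. ?g (fst q # snd q))"
    using sum.reindex[OF inj, of ?g] by (simp add: case_prod_beta')
  also have "\<dots> = (\<Sum>(p, ps)\<in>(V \<times> V) \<times> LL k. ?g (p # ps))"
    by (intro sum.cong refl) (auto simp: case_prod_beta)
  also have "\<dots> = (\<Sum>p\<in>V \<times> V. \<Sum>ps\<in>LL k. ?g (p # ps))"
    by (rule sum.cartesian_product[symmetric])
  also have "\<dots> = (\<Sum>(x, y)\<in>V \<times> V. \<Sum>ps\<in>LL k. ?g ((x, y) # ps))"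
  proof (intro sum.cong refl)
    fix p :: "'a \<times> 'a" obtain a b where "p = (a, b)" by (cases p)
    then show "(\<Sum>ps\<in>LL k. ?g (p # ps)) = (case p of (x, y) \<Rightarrow> \<Sum>ps\<in>LL k. ?g ((x, y) # ps))"
      by (simp only: prod.case)
  qed
  also have "\<dots> = (\<Sum>x\<in>V. \<Sum>y\<in>V. \<Sum>ps\<in>LL k. ?g ((x, y) # ps))"
    by (rule sum.cartesian_product[symmetric])
  also have "\<dots> = (\<Sum>x\<in>V. \<Sum>y\<in>V. if x \<in> Aset E prev cur \<and> y \<in> Mset E x then ?h x y else 0)"
  proof (intro sum.cong refl)
    fix x y assume x: "x \<in> V" and y: "y \<in> V"
    show "(\<Sum>ps\<in>LL k. ?g ((x, y) # ps)) = (if x \<in> Aset E prev cur \<and> y \<in> Mset E x then ?h x y else 0)"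
    proof (cases "x \<in> Aset E prev cur \<and> y \<in> Mset E x")
      case False
      have "?g ((x, y) # ps) = 0" for ps using False by auto
      then have "(\<Sum>ps\<in>LL k. ?g ((x, y) # ps)) = 0" by simp
      then show ?thesis by (simp only: if_not_P[OF False])
    next
      case True
      show ?thesis
      proof (cases "y = w0")
        case yw: True
        have "(\<Sum>ps\<in>LL k. ?g ((x, y) # ps)) = (\<Sum>ps\<in>LL k. if ps = [] then (if step E x cur y = G' then pr E prev cur x else 0) else 0)"
        proof (intro sum.cong refl)
          fix ps
          show "?g ((x, y) # ps) = (if ps = [] then (if step E x cur y = G' then pr E prev cur x else 0) else 0)"
            using True yw by (cases ps) (simp_all add: wt.simps)
        qed
        also have "\<dots> = (if step E x cur y = G' then pr E prev cur x else 0)"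
          using LL_fin by (simp add: LL_def)
        finally show ?thesis using True yw by simp
      next
        case yw: False
        have sub': "step E x cur y \<subseteq> V \<times> V" using step_sub[OF Suc.prems x y] .
        have "(\<Sum>ps\<in>LL k. ?g ((x, y) # ps)) = (\<Sum>ps\<in>LL k. pr E prev cur x *
            (if vp w0 (step E x cur y) (Some x) y ps G' then wt (step E x cur y) (Some x) y ps else 0))"
          using True yw by (intro sum.cong refl) (simp add: wt.simps)
        also have "\<dots> = pr E prev cur x * wp k (step E x cur y) w0 (Some x) y G'"
          unfolding Suc.IH[OF sub'] by (simp add: sum_distrib_left)
        finally show ?thesis using True yw by simp
      qed
    qed
  qed
  also have "\<dots> = (\<Sum>x\<in>Aset E prev cur. \<Sum>y\<in>Mset E x. ?h x y)"
  proof -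
    have "(\<Sum>x\<in>V. \<Sum>y\<in>V. if x \<in> Aset E prev cur \<and> y \<in> Mset E x then ?h x y else 0)
        = (\<Sum>x\<in>V. if x \<in> Aset E prev cur then (\<Sum>y\<in>Mset E x. ?h x y) else 0)"
    proof (intro sum.cong refl)
      fix x assume "x \<in> V"
      have "(\<Sum>y\<in>V. if x \<in> Aset E prev cur \<and> y \<in> Mset E x then ?h x y else 0)
          = (if x \<in> Aset E prev cur then (\<Sum>y\<in>V. if y \<in> Mset E x then ?h x y else 0) else 0)" by simp
      also have "\<dots> = (if x \<in> Aset E prev cur then (\<Sum>y\<in>Mset E x. ?h x y) else 0)"
        using sum.inter_restrict[OF finV, of "?h x" "Mset E x"] M_sub[of E x] by (simp add: Int_absorb1)
      finally show "(\<Sum>y\<in>V. if x \<in> Aset E prev cur \<and> y \<in> Mset E x then ?h x y else 0)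
          = (if x \<in> Aset E prev cur then (\<Sum>y\<in>Mset E x. ?h x y) else 0)" .
    qed
    also have "\<dots> = (\<Sum>x\<in>Aset E prev cur. \<Sum>y\<in>Mset E x. ?h x y)"
      using sum.inter_restrict[OF finV, of "\<lambda>x. \<Sum>y\<in>Mset E x. ?h x y" "Aset E prev cur"]
        A_sub[OF Suc.prems, of prev cur] by (simp add: Int_absorb1)
    finally show ?thesis .
  qed
  also have "\<dots> = wp (Suc k) E w0 prev cur G'" unfolding wp_Suc' by (rule refl)
  finally show ?case by simp
qed

lemma A_card:
  assumes "good w0 E prev cur" shows "card (Aset E prev cur) = card (nin G0 cur)"
proof -
  have inv: "winv w0 E cur" using good_winv[OF assms] .
  have cV: "cur \<in> V" using winv_V[OF inv] by blast
  have cnt: "card (nin E cur) + (if cur = w0 then 1 else 0) = card (nin G0 cur) + (if cur = cur then 1 else 0)"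
    using winv_cnt[OF inv cV] .
  show ?thesis
  proof (cases prev)
    case None
    then have "cur = w0" using assms unfolding good_def by simp
    then show ?thesis using None cnt unfolding Aset_def nbrs_nin by simp
  next
    case (Some x)
    then have cw: "cur \<noteq> w0" and xin: "x \<in> nin E cur" using assms unfolding good_def nin_def by auto
    have "card (nin E cur - {x}) = card (nin E cur) - 1"
      using xin nin_fin[OF winv_sub[OF inv]] by (simp add: card_Diff_singleton)
    then show ?thesis using Some cnt cw unfolding Aset_def nbrs_nin by simp
  qed
qed

definition Pset :: "'a \<Rightarrow> 'a set" where
  "Pset x = {y \<in> V. (x, y) \<notin> Ft}"

lemma Mset_eq: "E \<subseteq> V \<times> V \<Longrightarrow> Mset E x = Pset x - nout E x"
  unfolding Mset_def non_nbrs_def Pset_def nout_def by auto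

lemma nout_Pset: "E \<subseteq> V \<times> V \<Longrightarrow> nout E x \<subseteq> Pset x"
  unfolding Pset_def nout_def by auto

lemma Pset_fin: "finite (Pset x)"
  unfolding Pset_def using finV by simp

lemma Mset_card: "E \<subseteq> V \<times> V \<Longrightarrow> card (Mset E x) = card (Pset x) - card (nout E x)"
proof -
  assume sub: "E \<subseteq> V \<times> V"
  show ?thesis unfolding Mset_eq[OF sub]
    using card_Diff_subset[OF finite_subset[OF nout_Pset[OF sub] Pset_fin] nout_Pset[OF sub]] .
qed

lemma M_card:
  assumes "good w0 E prev cur" "x \<in> Aset E prev cur"
  shows "card (Mset E x) = card (Mset G0 x) + (if \<not> d \<and> x = w0 then 1 else 0)"
proof -
  have inv: "winv w0 E cur" using good_winv[OF assms(1)] .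
  have sub: "E \<subseteq> V \<times> V" using winv_sub[OF inv] .
  have sub0: "G0 \<subseteq> V \<times> V" using wf_sub[OF wf0] .
  have xc: "(x, cur) \<in> E" "(x, cur) \<notin> Ft" using A_stepok_x[OF assms(2)] by blast+
  have xV: "x \<in> V" using xc sub by blast
  have xnc: "x \<noteq> cur" using xc wf_noloop[OF winv_wf[OF inv]] by blast
  show ?thesis
  proof (cases d)
    case True
    have "d \<longrightarrow> (\<forall>v\<in>V. card (nout E v) = card (nout G0 v))" using inv unfolding winv_def by blast
    then have "card (nout E x) = card (nout G0 x)" using True xV by blast
    then show ?thesis using Mset_card[OF sub] Mset_card[OF sub0] True by simp
  next
    case False
    have e1: "card (nout E x) = card (nin E x)" using nout_nin_sym[OF False winv_wf[OF inv]] by simp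
    have e2: "card (nout G0 x) = card (nin G0 x)" using nout_nin_sym[OF False wf0] by simp
    have cnt: "card (nin E x) + (if x = w0 then 1 else 0) = card (nin G0 x)"
      using winv_cnt[OF inv xV] xnc by simp
    have le: "card (nout G0 x) \<le> card (Pset x)" using nout_Pset[OF sub0] Pset_fin card_mono by blast
    show ?thesis using Mset_card[OF sub] Mset_card[OF sub0] False e1 e2 cnt le by auto
  qed
qed

definition al :: "'a \<Rightarrow> real" where "al v = 1 / real (card (nin G0 v))"
definition be :: "'a \<Rightarrow> 'a \<Rightarrow> real" where
  "be w0 x = 1 / (real (card (Mset G0 x)) + (if \<not> d \<and> x = w0 then 1 else 0))"

definition wt' :: "'a \<Rightarrow> 'a \<Rightarrow> ('a \<times> 'a) list \<Rightarrow> real" where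
  "wt' w0 cur ps = prod_list (map al (cur # butlast (map snd ps))) * prod_list (map (be w0) (map fst ps))"

lemma pr_eq:
  assumes "good w0 E prev cur" "x \<in> Aset E prev cur"
  shows "pr E prev cur x = al cur * be w0 x"
  unfolding pr_def al_def be_def A_card[OF assms(1)] M_card[OF assms] by simp

lemma wt_eq: "good w0 E prev cur \<Longrightarrow> vp w0 E prev cur ps G' \<Longrightarrow> wt E prev cur ps = wt' w0 cur ps"
proof (induction ps arbitrary: E prev cur)
  case Nil then show ?case by simp
next
  case (Cons p ps)
  obtain x y where p: "p = (x, y)" by (cases p)
  have x: "x \<in> Aset E prev cur" and y: "y \<in> Mset E x" using Cons.prems(2) p by auto
  have pe: "pr E prev cur x = al cur * be w0 x" using pr_eq[OF Cons.prems(1) x] .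
  show ?case
  proof (cases "y = w0")
    case True
    then have "ps = []" using Cons.prems(2) p by simp
    then show ?thesis using p pe unfolding wt'_def by simp
  next
    case False
    have v: "vp w0 (step E x cur y) (Some x) y ps G'" using Cons.prems(2) p False by simp
    then have ne: "ps \<noteq> []" by (cases ps) auto
    have ih: "wt (step E x cur y) (Some x) y ps = wt' w0 y ps"
      using Cons.IH[OF good_step[OF Cons.prems(1) x y False] v] .
    have bl: "butlast (map snd ((x, y) # ps)) = y # butlast (map snd ps)" using ne by simp
    show ?thesis using p pe ih ne unfolding wt'_def bl by (simp add: algebra_simps)
  qed
qed

lemma wt'_revp: "evc w0 ps \<Longrightarrow> wt' w0 w0 (revp w0 ps) = wt' w0 w0 ps"
proof -
  assume e: "evc w0 ps"
  have "butlast (map snd (revp w0 ps)) = rev (butlast (map snd ps))"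
    using revp_snd'[OF e] by simp
  then show ?thesis unfolding wt'_def revp_fst by (simp del: rev_map add: rev_map[symmetric])
qed

lemma wp_sym:
  assumes G: "G \<in> C" and G': "G' \<in> C" and w: "w0 \<in> V" and ne: "nin G w0 \<noteq> {}"
  shows "wp k G w0 None w0 G' = wp k G' w0 None w0 G"
proof -
  have gG: "good w0 G None w0" using C_inv[OF G w] ne unfolding good_def by simp
  have "card (nin G' w0) = card (nin G w0)" using card_nin_C[OF G w] card_nin_C[OF G' w] by simp
  then have ne': "nin G' w0 \<noteq> {}" using ne nin_fin[OF C_sub[OF G]] by (metis card_0_eq nin_fin[OF C_sub[OF G']])
  have gG': "good w0 G' None w0" using C_inv[OF G' w] ne' unfolding good_def by simp
  have wfG: "wf_graph d V G" and wfG': "wf_graph d V G'" using C_wf G G' by auto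
  have red: "wp k H w0 None w0 H' = (\<Sum>ps\<in>{ps \<in> LL k. vp w0 H None w0 ps H'}. wt' w0 w0 ps)"
    if "good w0 H None w0" "H \<in> C" for H H'
  proof -
    have "wp k H w0 None w0 H' = (\<Sum>ps\<in>LL k. if vp w0 H None w0 ps H' then wt H None w0 ps else 0)"
      using wp_paths[OF C_sub[OF that(2)]] .
    also have "\<dots> = (\<Sum>ps\<in>{ps \<in> LL k. vp w0 H None w0 ps H'}. wt H None w0 ps)"
      by (rule sum.inter_filter[OF LL_fin, symmetric])
    also have "\<dots> = (\<Sum>ps\<in>{ps \<in> LL k. vp w0 H None w0 ps H'}. wt' w0 w0 ps)"
      using wt_eq[OF that(1)] by (intro sum.cong refl) auto
    finally show ?thesis .
  qed
  have "(\<Sum>ps\<in>{ps \<in> LL k. vp w0 G None w0 ps G'}. wt' w0 w0 ps) =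
        (\<Sum>ps\<in>{ps \<in> LL k. vp w0 G' None w0 ps G}. wt' w0 w0 ps)"
  proof (rule sum.reindex_bij_witness[where i="revp w0" and j="revp w0"])
    have LLr: "revp w0 ps \<in> LL k" if "ps \<in> LL k" for ps
      using that revp_set[OF _ w] revp_len unfolding LL_def by auto
    fix a assume a: "a \<in> {ps \<in> LL k. vp w0 G None w0 ps G'}"
    then have ea: "evc w0 a" unfolding vp_char by blast
    show "revp w0 (revp w0 a) = a" using revp_invol[OF ea] .
    show "revp w0 a \<in> {ps \<in> LL k. vp w0 G' None w0 ps G}" using a LLr vp_rev[OF _ wfG] by blast
    show "wt' w0 w0 (revp w0 a) = wt' w0 w0 a" using wt'_revp[OF ea] .
  next
    have LLr: "revp w0 ps \<in> LL k" if "ps \<in> LL k" for ps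
      using that revp_set[OF _ w] revp_len unfolding LL_def by auto
    fix b assume b: "b \<in> {ps \<in> LL k. vp w0 G' None w0 ps G}"
    then have eb: "evc w0 b" unfolding vp_char by blast
    show "revp w0 (revp w0 b) = b" using revp_invol[OF eb] .
    show "revp w0 b \<in> {ps \<in> LL k. vp w0 G None w0 ps G'}" using b LLr vp_rev[OF _ wfG'] by blast
  qed
  then show ?thesis using red[OF gG G] red[OF gG' G'] by simp
qed

definition SS :: "('a \<times> 'a) set \<Rightarrow> 'a set" where
  "SS G = {v \<in> V. nbrs Ft G v \<noteq> {}}"

lemma tp_eq: "trans_prob d V F G0 G G' =
  (if SS G = {} then (if G' = G then 1 else 0)
   else (\<Sum>w\<in>SS G. (1 / real (card (SS G))) * (SUP k. wp k G w None w G')))"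
  unfolding trans_prob_def Let_def SS_def by (rule refl)

lemma SS_fin: "finite (SS G)" unfolding SS_def using finV by simp

lemma SS_good: "G \<in> C \<Longrightarrow> w \<in> SS G \<Longrightarrow> good w G None w"
  using C_inv unfolding SS_def good_def nbrs_nin by auto

lemma SS_C: "G \<in> C \<Longrightarrow> G' \<in> C \<Longrightarrow> SS G = SS G'"
proof -
  assume G: "G \<in> C" and G': "G' \<in> C"
  have "nin G v \<noteq> {} \<longleftrightarrow> nin G' v \<noteq> {}" if v: "v \<in> V" for v
  proof -
    have "card (nin G v) = card (nin G' v)" using card_nin_C[OF G v] card_nin_C[OF G' v] by simp
    then show ?thesis using nin_fin[OF C_sub[OF G]] nin_fin[OF C_sub[OF G']] by (metis card_0_eq)
  qed
  then show ?thesis unfolding SS_def nbrs_nin by blast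
qed

lemma bdd_wp: "good w0 G None w0 \<Longrightarrow> bdd_above (range (\<lambda>k. wp k G w0 None w0 G'))"
  using wp_le_T[OF good_winv] T_le1 by (intro bdd_aboveI[of _ 1]) (fastforce intro: order_trans)

lemma SUP_ge: "good w0 G None w0 \<Longrightarrow> wp k G w0 None w0 G' \<le> (SUP k. wp k G w0 None w0 G')"
  using bdd_wp by (intro cSUP_upper) auto

lemma SUP_nonneg: "good w0 G None w0 \<Longrightarrow> 0 \<le> (SUP k. wp k G w0 None w0 G')"
  using SUP_ge[of w0 G 0 G'] wp_nonneg[of 0 G w0 None w0 G'] by linarith

lemma tp_nonneg: "G \<in> C \<Longrightarrow> 0 \<le> trans_prob d V F G0 G G'"
  unfolding tp_eq using SUP_nonneg SS_good by (auto intro!: sum_nonneg mult_nonneg_nonneg)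

lemma part1: "G \<in> C \<Longrightarrow> trans_prob d V F G0 G G' \<noteq> 0 \<Longrightarrow> G' \<in> C"
proof (rule ccontr)
  assume G: "G \<in> C" and ne: "trans_prob d V F G0 G G' \<noteq> 0" and nG: "G' \<notin> C"
  have "G' \<noteq> G" using G nG by blast
  moreover have "(SUP k. wp k G w None w G') = 0" if "w \<in> SS G" for w
  proof -
    have "wp k G w None w G' = 0" for k using wp_support[OF good_winv[OF SS_good[OF G that]]] nG by blast
    then show ?thesis by simp
  qed
  ultimately have "trans_prob d V F G0 G G' = 0" unfolding tp_eq by simp
  then show False using ne by simp
qed

lemma part2: "G \<in> C \<Longrightarrow> (\<Sum>G'\<in>C. trans_prob d V F G0 G G') = 1"
proof -
  assume G: "G \<in> C"
  show ?thesis
  proof (cases "SS G = {}")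
    case True
    then show ?thesis unfolding tp_eq using G finite_C by (simp add: sum.delta')
  next
    case False
    have "(\<Sum>G'\<in>C. trans_prob d V F G0 G G') =
        (\<Sum>G'\<in>C. \<Sum>w\<in>SS G. (1 / real (card (SS G))) * (SUP k. wp k G w None w G'))"
      unfolding tp_eq using False by simp
    also have "\<dots> = (\<Sum>w\<in>SS G. (1 / real (card (SS G))) * (\<Sum>G'\<in>C. (SUP k. wp k G w None w G')))"
      by (subst sum.swap) (simp add: sum_distrib_left)
    also have "\<dots> = (\<Sum>w\<in>SS G. (1 / real (card (SS G))))"
      using sum_SUP SS_good[OF G] by simp
    also have "\<dots> = 1" using False SS_fin by simp
    finally show ?thesis .
  qed
qed

lemma part3: "G \<in> C \<Longrightarrow> G' \<in> C \<Longrightarrow> trans_prob d V F G0 G G' = trans_prob d V F G0 G' G"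
proof -
  assume G: "G \<in> C" and G': "G' \<in> C"
  have S: "SS G' = SS G" using SS_C[OF G G'] by simp
  have "(SUP k. wp k G w None w G') = (SUP k. wp k G' w None w G)" if "w \<in> SS G" for w
  proof -
    have "w \<in> V" "nin G w \<noteq> {}" using that unfolding SS_def nbrs_nin by auto
    then show ?thesis using wp_sym[OF G G'] by simp
  qed
  then show ?thesis unfolding tp_eq S by (auto intro!: sum.cong)
qed

lemma diff_edge:
  assumes G: "G \<in> C" and G': "G' \<in> C" and ne: "G \<noteq> G'"
  shows "\<exists>x w. (x, w) \<in> G \<and> (x, w) \<notin> G'"
proof (rule ccontr)
  assume "\<not> ?thesis"
  then have sub: "G \<subseteq> G'" by auto
  then obtain u v where uv: "(u, v) \<in> G'" "(u, v) \<notin> G" using ne by auto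
  have vV: "v \<in> V" using uv C_sub[OF G'] by blast
  have "{a. (a, v) \<in> G} \<subset> {a. (a, v) \<in> G'}" using sub uv by auto
  moreover have "finite {a. (a, v) \<in> G'}" using C_sub[OF G'] finV by (intro finite_subset[OF _ finV]) auto
  ultimately have "indeg G v < indeg G' v" unfolding indeg_def by (rule psubset_card_mono[rotated])
  moreover have "indeg G v = indeg G0 v" "indeg G' v = indeg G0 v" using G G' vV unfolding graph_class_def by auto
  ultimately show False by simp
qed

lemma irr_step:
  assumes G: "G \<in> C" and G': "G' \<in> C" and ne: "G \<noteq> G'"
  shows "\<exists>H\<in>C. 0 < trans_prob d V F G0 G H \<and> card (sd H G') < card (sd G G')"
proof -
  obtain x w where xw: "(x, w) \<in> G" "(x, w) \<notin> G'" using diff_edge[OF assms] by blast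
  have wfG: "wf_graph d V G" using C_wf[OF G] .
  have xV: "x \<in> V" and wV: "w \<in> V" using xw C_sub[OF G] by auto
  have nf: "(x, w) \<notin> Ft" using xw G G' unfolding fixed_pairs_def by blast
  have wS: "w \<in> SS G" using xw nf wV unfolding SS_def nbrs_def by blast
  have g: "good w G None w" using SS_good[OF G wS] .
  have inv: "winv w G w" using good_winv[OF g] .
  have xnw: "x \<noteq> w" using xw wf_noloop[OF wfG] by blast
  obtain y where y: "(x, y) \<in> G'" "(x, y) \<notin> G" "(x, y) \<notin> Ft" "y \<in> V"
    using out_exists[OF inv G' xw(1) xw(2) nf xnw] by blast
  have xA: "x \<in> Aset G None w" using xw nf unfolding Aset_def nbrs_def by simp
  have yM: "y \<in> Mset G x" using y unfolding Mset_def non_nbrs_def by blast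
  have ok: "stepok G x w y" using AM_stepok[OF xA yM] .
  let ?E1 = "step G x w y"
  have lt: "card (sd ?E1 G') < card (sd G G')" using sd_step_less[OF wfG G' ok xw(2) y(1)] .
  have subG: "G \<subseteq> V \<times> V" using C_sub[OF G] .
  have pp: "0 < pr G None w x"
  proof -
    have "0 < cc" using cc_pos[OF xV] .
    then show ?thesis using pr_ge[OF subG xA yM] by linarith
  qed
  let ?f = "\<lambda>K G'' a b. pr G None w a *
     (if b = w then (if step G a w b = G'' then 1 else 0) else wp K (step G a w b) w (Some a) b G'')"
  have single: "?f K G'' x y \<le> wp (Suc K) G w None w G''" for K G''
  proof -
    have "?f K G'' x y \<le> (\<Sum>a\<in>Aset G None w. \<Sum>b\<in>Mset G a. ?f K G'' a b)"
      by (rule dsum_ge[where f="?f K G''" and A="Aset G None w" and B="Mset G", OF A_fin[OF subG] M_fin xA yM])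
        (intro mult_nonneg_nonneg pr_nonneg; simp add: wp_nonneg)
    also have "\<dots> = wp (Suc K) G w None w G''" unfolding wp_Suc' by (rule refl)
    finally show ?thesis .
  qed
  obtain H K where H: "H \<in> C" "0 < wp K G w None w H" "card (sd H G') < card (sd G G')"
  proof (cases "y = w")
    case True
    have "?E1 \<in> C" using good_stop[OF g xA yM True] .
    moreover have "0 < wp (Suc 0) G w None w ?E1" using single[where K=0 and G''="?E1"] True pp by simp
    ultimately show ?thesis using that lt by blast
  next
    case False
    have g1: "good w ?E1 (Some x) y" using good_step[OF g xA yM False] .
    obtain G'' where G'': "cc ^ (card (sd ?E1 G') + 1) \<le> wp (card (sd ?E1 G') + 1) ?E1 w (Some x) y G''"
      "sd G'' G' \<subseteq> sd ?E1 G'"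
      using greedy[OF G' g1 y(1)] by blast
    let ?K = "card (sd ?E1 G') + 1"
    have p1: "0 < wp ?K ?E1 w (Some x) y G''" using G''(1) cc_pos[OF xV] by (meson less_le_trans zero_less_power)
    have "0 < ?f ?K G'' x y" using False pp p1 by simp
    then have p2: "0 < wp (Suc ?K) G w None w G''" using single[where K="?K" and G''=G''] by linarith
    have C'': "G'' \<in> C" using wp_support[OF inv] p2 by (metis less_irrefl)
    have "card (sd G'' G') \<le> card (sd ?E1 G')"
      using G''(2) sd_fin[OF C_sub[OF C''] C_sub[OF G']] sd_fin[OF step_sub[OF subG xV y(4)] C_sub[OF G']]
      by (intro card_mono) auto
    then show ?thesis using that[OF C'' p2] lt by linarith
  qed
  have "0 < (1 / real (card (SS G))) * (SUP k. wp k G w None w H)"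
  proof -
    have "card (SS G) > 0" using wS SS_fin card_gt_0_iff by blast
    moreover have "0 < (SUP k. wp k G w None w H)" using SUP_ge[OF g, of K H] H(2) by linarith
    ultimately show ?thesis by simp
  qed
  also have "\<dots> \<le> (\<Sum>v\<in>SS G. (1 / real (card (SS G))) * (SUP k. wp k G v None v H))"
    using wS SS_fin SUP_nonneg SS_good[OF G]
    by (intro member_le_sum[where f="\<lambda>v. (1 / real (card (SS G))) * (SUP k. wp k G v None v H)"]) auto
  also have "\<dots> = trans_prob d V F G0 G H" unfolding tp_eq using wS by auto
  finally show ?thesis using H by blast
qed

lemma tpow_nonneg: "H \<in> C \<Longrightarrow> 0 \<le> trans_pow d V F G0 n H G'"
proof (induction n arbitrary: H)
  case 0 then show ?case by simp
next
  case (Suc n) then show ?case using tp_nonneg by (auto intro!: sum_nonneg mult_nonneg_nonneg)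
qed

lemma part4: "G' \<in> C \<Longrightarrow> G \<in> C \<Longrightarrow> \<exists>n. 0 < trans_pow d V F G0 n G G'"
proof (induction "card (sd G G')" arbitrary: G rule: less_induct)
  case less
  show ?case
  proof (cases "G = G'")
    case True then show ?thesis by (intro exI[of _ 0]) simp
  next
    case False
    obtain H where H: "H \<in> C" "0 < trans_prob d V F G0 G H" "card (sd H G') < card (sd G G')"
      using irr_step[OF less.prems(2) less.prems(1) False] by blast
    obtain n where n: "0 < trans_pow d V F G0 n H G'" using less.hyps[OF H(3) less.prems(1) H(1)] by blast
    have "0 < trans_prob d V F G0 G H * trans_pow d V F G0 n H G'" using H(2) n by simp
    also have "\<dots> \<le> (\<Sum>H'\<in>C. trans_prob d V F G0 G H' * trans_pow d V F G0 n H' G')"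
      using H(1) finite_C tp_nonneg[OF less.prems(2)] tpow_nonneg
      by (intro member_le_sum[where f="\<lambda>H'. trans_prob d V F G0 G H' * trans_pow d V F G0 n H' G'"]
          mult_nonneg_nonneg) auto
    also have "\<dots> = trans_pow d V F G0 (Suc n) G G'" by simp
    finally show ?thesis by blast
  qed
qed

end

theorem proposition2:
  fixes d :: bool and V :: "'a set" and F G0 :: "('a \<times> 'a) set"
  assumes "finite V" and "wf_graph d V G0"
  defines "\<G> \<equiv> graph_class d V F G0"
      and "P \<equiv> trans_prob d V F G0"
      and "\<pi> \<equiv> (\<lambda>G::('a \<times> 'a) set. 1 / real (card (graph_class d V F G0)))"
  shows "(\<forall>G\<in>\<G>. \<forall>G'. P G G' \<noteq> 0 \<longrightarrow> G' \<in> \<G>)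
       \<and> (\<forall>G\<in>\<G>. (\<Sum>G'\<in>\<G>. P G G') = 1)
       \<and> (\<forall>G\<in>\<G>. \<forall>G'\<in>\<G>. \<pi> G * P G G' = \<pi> G' * P G' G)
       \<and> (\<forall>G\<in>\<G>. \<forall>G'\<in>\<G>. \<exists>n. trans_pow d V F G0 n G G' > 0)"
proof -
  interpret S: setting d V F G0 using assms(1,2) by unfold_locales
  have a: "\<forall>G\<in>\<G>. \<forall>G'. P G G' \<noteq> 0 \<longrightarrow> G' \<in> \<G>"
    unfolding \<G>_def P_def using S.part1 by blast
  have b: "\<forall>G\<in>\<G>. (\<Sum>G'\<in>\<G>. P G G') = 1"
    unfolding \<G>_def P_def using S.part2 by blast
  have c: "\<forall>G\<in>\<G>. \<forall>G'\<in>\<G>. \<pi> G * P G G' = \<pi> G' * P G' G"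
    unfolding \<G>_def P_def \<pi>_def using S.part3 by simp
  have e: "\<forall>G\<in>\<G>. \<forall>G'\<in>\<G>. \<exists>n. trans_pow d V F G0 n G G' > 0"
    unfolding \<G>_def using S.part4 by blast
  show ?thesis using a b c e by blast
qed

end
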